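(* Let $n\ge 2$, let $(a_{rq})_{1\le r,q\le n}$ be a real (not necessarily symmetric) matrix, and let $f:\mathbb{R}^n\to\mathbb{R}$, $f(x_1,\dots,x_n)=\sum_{r,q=1}^n a_{rq}\,x_r x_q^2$. Let $M=\mathrm{graph}(f)\subset\mathbb{R}^{n+1}$ with the induced metric $g$, and let $g(t)$, $t\in[0,T)$, be a smooth family of metrics on a neighborhood of $p$ (the origin) in $M$ solving the Ricci flow $\partial_t g=-2\,\mathrm{Ric}(g)$ with $g(0)=g$. Then $Rm(0,p)=0$, and in the global coordinates $x$ the time derivatives $\partial_t R_{ijkl}(0,p)$, for $i<j$, $k<l$, $i\le k$, are: (i) $0$ if $i,j,k,l$ are mutually distinct; (ii) $8(a_{il}a_{lj}+a_{li}a_{ij})-8a_{ij}a_{lj}$ if $i<k=j<l$; (iii) $8a_{ij}a_{kj}-8(a_{ik}a_{kj}+a_{ki}a_{ij})$ if $i<k<l=j$; (iv) $8a_{li}a_{ji}-8(a_{jl}a_{li}+a_{lj}a_{ji})$ if $i=k$, $j\ne l$; (v) $8(a_{ij}^2+a_{ji}^2)-8\big(\sum_{q\ne i,j}a_{qi}a_{qj}+3a_{ii}a_{ij}+3a_{jj}a_{ji}\big)$ if $i=k$, $j=l$. (All other components are determined from these by the symmetries of the curvature tensor.) In particular, if $a_{\alpha\beta}a_{\beta\gamma}+a_{\beta\alpha}a_{\alpha\gamma}=a_{\alpha\gamma}a_{\beta\gamma}$ for all mutually distinct $\alpha,\beta,\gamma$, then $\partial_t R_{ijkl}(0,p)=0$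 whenever $\{i,j\}\neq\{k,l\}$. *)

theory Defs
  imports "HOL-Analysis.Analysis"
begin

definition dir_deriv :: "'a::real_normed_vector \<Rightarrow> ('a \<Rightarrow> real) \<Rightarrow> 'a \<Rightarrow> real" where
  "dir_deriv v F z = deriv (\<lambda>s. F (z + s *\<^sub>R v)) 0"

fun dir_derivs :: "'a::real_normed_vector list \<Rightarrow> ('a \<Rightarrow> real) \<Rightarrow> 'a \<Rightarrow> real" where
  "dir_derivs [] F = F"
| "dir_derivs (v # vs) F = dir_deriv v (dir_derivs vs F)"

definition smooth_fun_on :: "'a::real_normed_vector set \<Rightarrow> ('a \<Rightarrow> real) \<Rightarrow> bool" where
  "smooth_fun_on S F \<longleftrightarrow> open S \<and>
     (\<forall>vs. continuous_on S (dir_derivs vs F) \<and>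
        (\<forall>v. \<forall>z\<in>S. (\<lambda>s. dir_derivs vs F (z + s *\<^sub>R v)) differentiable (at 0)))"

type_synonym 'n metric_family = "real \<Rightarrow> real^'n \<Rightarrow> real^'n^'n"

definition pdx :: "'n::finite \<Rightarrow> (real^'n \<Rightarrow> real) \<Rightarrow> real^'n \<Rightarrow> real" where
  "pdx k F x = deriv (\<lambda>s. F (x + s *\<^sub>R axis k 1)) 0"

definition Christoffel :: "'n::finite metric_family \<Rightarrow> real \<Rightarrow> real^'n \<Rightarrow> 'n \<Rightarrow> 'n \<Rightarrow> 'n \<Rightarrow> real" where
  "Christoffel g t x i j m =
     (1/2) * (\<Sum>l\<in>UNIV. matrix_inv (g t x) $ m $ l *
        (pdx i (\<lambda>y. g t y $ j $ l) x + pdx j (\<lambda>y. g t y $ i $ l) x - pdx l (\<lambda>y. g t y $ i $ j) x))"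

text \<open>R(d_i,d_j)d_k = R_ijk^m d_m with R(X,Y)Z = nabla_X nabla_Y Z - nabla_Y nabla_X Z - nabla_[X,Y] Z.\<close>
definition Riem31 :: "'n::finite metric_family \<Rightarrow> real \<Rightarrow> real^'n \<Rightarrow> 'n \<Rightarrow> 'n \<Rightarrow> 'n \<Rightarrow> 'n \<Rightarrow> real" where
  "Riem31 g t x i j k m =
     pdx i (\<lambda>y. Christoffel g t y j k m) x - pdx j (\<lambda>y. Christoffel g t y i k m) x
     + (\<Sum>p\<in>UNIV. Christoffel g t x j k p * Christoffel g t x i p m
                 - Christoffel g t x i k p * Christoffel g t x j p m)"

text \<open>R_ijkl = g(R(d_i,d_j)d_k, d_l); with this convention R_ijji is the sectional curvature.\<close>
definition Rm :: "'n::finite metric_family \<Rightarrow> real \<Rightarrow> real^'n \<Rightarrow> 'n \<Rightarrow> 'n \<Rightarrow> 'n \<Rightarrow> 'n \<Rightarrow> real" where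
  "Rm g t x i j k l = (\<Sum>m\<in>UNIV. Riem31 g t x i j k m * g t x $ m $ l)"

definition Ric :: "'n::finite metric_family \<Rightarrow> real \<Rightarrow> real^'n \<Rightarrow> 'n \<Rightarrow> 'n \<Rightarrow> real" where
  "Ric g t x j k = (\<Sum>i\<in>UNIV. Riem31 g t x i j k i)"

definition cubic_f :: "('n::finite \<Rightarrow> 'n \<Rightarrow> real) \<Rightarrow> real^'n \<Rightarrow> real" where
  "cubic_f a x = (\<Sum>r\<in>UNIV. \<Sum>q\<in>UNIV. a r q * x $ r * (x $ q)^2)"

text \<open>Induced (pull-back of Euclidean) metric of graph(f) in the graph coordinates x:
  g_ij = delta_ij + d_i f * d_j f.\<close>
definition graph_metric :: "(real^'n \<Rightarrow> real) \<Rightarrow> real^'n \<Rightarrow> real^'n^'n::finite" where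
  "graph_metric f x = (\<chi> i j. (if i = j then 1 else 0) + pdx i f x * pdx j f x)"

end

theory Submission
  imports Defs
begin

lemma dd_line:
  assumes "((\<lambda>s. H (z + s *\<^sub>R v)) has_real_derivative D) (at 0)"
  shows "dir_deriv v H z = D"
  unfolding dir_deriv_def using DERIV_imp_deriv assms by blast

lemma line_shift:
  fixes z v :: "'a::real_normed_vector"
  assumes "((\<lambda>s. H (z + s0 *\<^sub>R v + s *\<^sub>R v)) has_real_derivative D) (at 0)"
  shows "((\<lambda>s. H (z + s *\<^sub>R v)) has_real_derivative D) (at s0)"
proof -
  have "((\<lambda>s. H (z + s *\<^sub>R v)) has_real_derivative D) (at (0 + s0))"
    unfolding DERIV_shift
    using assms by (simp add: scaleR_add_left add.assoc add.commute add.left_commute)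
  then show ?thesis by simp
qed

lemma eventually_line_in_open:
  fixes z v :: "'a::real_normed_vector"
  assumes "open S" "z \<in> S"
  shows "eventually (\<lambda>s. z + s *\<^sub>R v \<in> S) (nhds (0::real))"
proof -
  have "continuous_on UNIV (\<lambda>s::real. z + s *\<^sub>R v)"
    by (intro continuous_intros)
  then have "open ((\<lambda>s::real. z + s *\<^sub>R v) -` S)"
    using assms(1) open_vimage by blast
  moreover have "0 \<in> (\<lambda>s::real. z + s *\<^sub>R v) -` S" using assms(2) by simp
  ultimately show ?thesis
    unfolding eventually_nhds by blast
qed

lemma dd_cong_open:
  fixes z v :: "'a::real_normed_vector"
  assumes "open S" "z \<in> S" "\<And>x. x \<in> S \<Longrightarrow> H x = K x"
  shows "dir_deriv v H z = dir_deriv v K z"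
proof -
  have "eventually (\<lambda>s. H (z + s *\<^sub>R v) = K (z + s *\<^sub>R v)) (nhds (0::real))"
    using eventually_line_in_open[OF assms(1,2), of v]
    by eventually_elim (use assms(3) in auto)
  then show ?thesis unfolding dir_deriv_def by (rule deriv_cong_ev) simp
qed

lemma line_deriv_cong_open:
  fixes z v :: "'a::real_normed_vector"
  assumes "open S" "z \<in> S" "\<And>x. x \<in> S \<Longrightarrow> H x = K x"
    and "((\<lambda>s. K (z + s *\<^sub>R v)) has_real_derivative D) (at 0)"
  shows "((\<lambda>s. H (z + s *\<^sub>R v)) has_real_derivative D) (at 0)"
proof -
  have "eventually (\<lambda>s. H (z + s *\<^sub>R v) = K (z + s *\<^sub>R v)) (nhds (0::real))"
    using eventually_line_in_open[OF assms(1,2), of v]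
    by eventually_elim (use assms(3) in auto)
  then show ?thesis using assms(4) by (subst DERIV_cong_ev) auto
qed

lemma dir_derivs_append: "dir_derivs (vs @ [v]) H = dir_derivs vs (dir_deriv v H)"
  by (induction vs) auto

section \<open>Polynomial algebras over a base set of functions\<close>

inductive_set polys :: "('a \<Rightarrow> real) set \<Rightarrow> ('a \<Rightarrow> real) set" for B where
  pbase: "b \<in> B \<Longrightarrow> b \<in> polys B"
| pconst: "(\<lambda>z. c) \<in> polys B"
| padd: "p \<in> polys B \<Longrightarrow> q \<in> polys B \<Longrightarrow> (\<lambda>z. p z + q z) \<in> polys B"
| pmult: "p \<in> polys B \<Longrightarrow> q \<in> polys B \<Longrightarrow> (\<lambda>z. p z * q z) \<in> polys B"

lemma polys_mono: "p \<in> polys B \<Longrightarrow> B \<subseteq> C \<Longrightarrow> p \<in> polys C"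
  by (induction rule: polys.induct) (auto intro: polys.pbase polys.pconst polys.padd polys.pmult)

lemma polys_sum: "finite A \<Longrightarrow> (\<And>i. i \<in> A \<Longrightarrow> f i \<in> polys B) \<Longrightarrow> (\<lambda>z. \<Sum>i\<in>A. f i z) \<in> polys B"
proof (induction A rule: finite_induct)
  case empty then show ?case using pconst[of 0 B] by simp
next
  case (insert x F)
  then show ?case by (simp add: padd)
qed

lemma polys_prod: "finite A \<Longrightarrow> (\<And>i. i \<in> A \<Longrightarrow> f i \<in> polys B) \<Longrightarrow> (\<lambda>z. \<Prod>i\<in>A. f i z) \<in> polys B"
proof (induction A rule: finite_induct)
  case empty then show ?case using pconst[of 1 B] by simp
next
  case (insert x F)
  then show ?case by (simp add: pmult)
qed

definition closed_base :: "('a::real_normed_vector \<Rightarrow> real) set \<Rightarrow> 'a set \<Rightarrow> bool" where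
  "closed_base B S \<longleftrightarrow> (\<forall>b\<in>B. continuous_on S b \<and>
     (\<forall>v. \<exists>q\<in>polys B. \<forall>z\<in>S. ((\<lambda>s. b (z + s *\<^sub>R v)) has_real_derivative q z) (at 0)))"

lemma polys_props:
  assumes cb: "closed_base B S" and p: "p \<in> polys B"
  shows "continuous_on S p \<and>
     (\<forall>v. \<exists>q\<in>polys B. \<forall>z\<in>S. ((\<lambda>s. p (z + s *\<^sub>R v)) has_real_derivative q z) (at 0))"
  using p
proof (induction rule: polys.induct)
  case (pbase b)
  then show ?case using cb unfolding closed_base_def by blast
next
  case (pconst c)
  show ?case
  proof (intro conjI allI)
    show "continuous_on S (\<lambda>z. c)" by (rule continuous_on_const)
    fix v
    show "\<exists>q\<in>polys B. \<forall>z\<in>S. ((\<lambda>s. c) has_real_derivative q z) (at 0)"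
      by (rule bexI[of _ "\<lambda>z. 0"]) (auto intro: polys.pconst)
  qed
next
  case (padd p q)
  show ?case
  proof (intro conjI allI)
    show "continuous_on S (\<lambda>z. p z + q z)" using padd by (intro continuous_intros) auto
  next
    fix v
    obtain p' where p': "p' \<in> polys B" "\<And>z. z \<in> S \<Longrightarrow> ((\<lambda>s. p (z + s *\<^sub>R v)) has_real_derivative p' z) (at 0)"
      using padd by blast
    obtain q' where q': "q' \<in> polys B" "\<And>z. z \<in> S \<Longrightarrow> ((\<lambda>s. q (z + s *\<^sub>R v)) has_real_derivative q' z) (at 0)"
      using padd by blast
    show "\<exists>r\<in>polys B. \<forall>z\<in>S. ((\<lambda>s. p (z + s *\<^sub>R v) + q (z + s *\<^sub>R v)) has_real_derivative r z) (at 0)"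
      by (rule bexI[of _ "\<lambda>z. p' z + q' z"]) (auto intro!: DERIV_add p'(2) q'(2) intro: polys.padd p'(1) q'(1))
  qed
next
  case (pmult p q)
  show ?case
  proof (intro conjI allI)
    show "continuous_on S (\<lambda>z. p z * q z)" using pmult by (intro continuous_intros) auto
  next
    fix v
    obtain p' where p': "p' \<in> polys B" "\<And>z. z \<in> S \<Longrightarrow> ((\<lambda>s. p (z + s *\<^sub>R v)) has_real_derivative p' z) (at 0)"
      using pmult by blast
    obtain q' where q': "q' \<in> polys B" "\<And>z. z \<in> S \<Longrightarrow> ((\<lambda>s. q (z + s *\<^sub>R v)) has_real_derivative q' z) (at 0)"
      using pmult by blast
    have "\<forall>z\<in>S. ((\<lambda>s. p (z + s *\<^sub>R v) * q (z + s *\<^sub>R v)) has_real_derivative (p' z * q z + p z * q' z)) (at 0)"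
    proof
      fix z assume z: "z \<in> S"
      show "((\<lambda>s. p (z + s *\<^sub>R v) * q (z + s *\<^sub>R v)) has_real_derivative (p' z * q z + p z * q' z)) (at 0)"
        using DERIV_mult[OF p'(2)[OF z] q'(2)[OF z]] by (simp add: mult.commute)
    qed
    moreover have "(\<lambda>z. p' z * q z + p z * q' z) \<in> polys B"
      using p'(1) q'(1) pmult.hyps by (intro polys.padd polys.pmult)
    ultimately show "\<exists>r\<in>polys B. \<forall>z\<in>S. ((\<lambda>s. p (z + s *\<^sub>R v) * q (z + s *\<^sub>R v)) has_real_derivative r z) (at 0)"
      by (intro bexI[of _ "\<lambda>z. p' z * q z + p z * q' z"]) auto
  qed
qed

lemma closed_base_inverse:
  assumes cb: "closed_base B S" and p: "p \<in> polys B" and nz: "\<And>z. z \<in> S \<Longrightarrow> p z \<noteq> 0"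
  shows "closed_base (insert (\<lambda>z. 1 / p z) B) S"
  unfolding closed_base_def
proof (intro ballI conjI allI)
  let ?C = "insert (\<lambda>z. 1 / p z) B"
  have sub: "B \<subseteq> ?C" by auto
  fix b assume b: "b \<in> ?C"
  show "continuous_on S b"
  proof (cases "b = (\<lambda>z. 1 / p z)")
    case True
    have "continuous_on S p" using polys_props[OF cb p] by blast
    then show ?thesis unfolding True by (rule continuous_on_divide[OF continuous_on_const]) (use nz in auto)
  next
    case False
    then have "b \<in> B" using b by auto
    then show ?thesis using cb unfolding closed_base_def by blast
  qed
  fix v
  show "\<exists>q\<in>polys ?C. \<forall>z\<in>S. ((\<lambda>s. b (z + s *\<^sub>R v)) has_real_derivative q z) (at 0)"
  proof (cases "b = (\<lambda>z. 1 / p z)")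
    case True
    obtain p' where p': "p' \<in> polys B" "\<And>z. z \<in> S \<Longrightarrow> ((\<lambda>s. p (z + s *\<^sub>R v)) has_real_derivative p' z) (at 0)"
      using polys_props[OF cb p] by blast
    have "\<forall>z\<in>S. ((\<lambda>s. 1 / p (z + s *\<^sub>R v)) has_real_derivative
            ((\<lambda>z. (- 1) * p' z * (1 / p z) * (1 / p z)) z)) (at 0)"
    proof
      fix z assume z: "z \<in> S"
      have pz: "p z \<noteq> 0" using nz[OF z] .
      have "((\<lambda>s. inverse (p (z + s *\<^sub>R v))) has_real_derivative
             (- (p' z * inverse (p (z + 0 *\<^sub>R v) ^ Suc (Suc 0))))) (at 0)"
        by (rule DERIV_inverse_fun) (use p'(2)[OF z] pz in simp_all)
      moreover have "- (p' z * inverse (p (z + 0 *\<^sub>R v) ^ Suc (Suc 0))) = (- 1) * p' z * (1 / p z) * (1 / p z)"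
        by (simp add: power2_eq_square divide_inverse)
      ultimately show "((\<lambda>s. 1 / p (z + s *\<^sub>R v)) has_real_derivative
            ((\<lambda>z. (- 1) * p' z * (1 / p z) * (1 / p z)) z)) (at 0)"
        by (simp add: divide_inverse mult.assoc)
    qed
    moreover have "(\<lambda>z. (- 1) * p' z * (1 / p z) * (1 / p z)) \<in> polys ?C"
    proof -
      have i: "(\<lambda>z. 1 / p z) \<in> polys ?C" by (rule polys.pbase) simp
      have "(\<lambda>z. (- 1) * p' z) \<in> polys ?C"
        by (rule polys.pmult[OF polys.pconst polys_mono[OF p'(1) sub]])
      then have "(\<lambda>z. (- 1) * p' z * (1 / p z)) \<in> polys ?C"
        by (rule polys.pmult[OF _ i])
      then show ?thesis by (rule polys.pmult[OF _ i])
    qed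
    ultimately show ?thesis unfolding True by (intro bexI[of _ "\<lambda>z. (- 1) * p' z * (1 / p z) * (1 / p z)"]) auto
  next
    case False
    then have "b \<in> B" using b by auto
    then obtain q where "q \<in> polys B" "\<forall>z\<in>S. ((\<lambda>s. b (z + s *\<^sub>R v)) has_real_derivative q z) (at 0)"
      using cb unfolding closed_base_def by blast
    then show ?thesis using polys_mono[OF _ sub] by blast
  qed
qed

locale smalg =
  fixes S :: "'a::real_normed_vector set" and B :: "('a \<Rightarrow> real) set"
  assumes openS: "open S" and cb: "closed_base B S"
begin

definition Sm :: "('a \<Rightarrow> real) set" where
  "Sm = {H. \<exists>p\<in>polys B. \<forall>z\<in>S. H z = p z}"

lemma Sm_polys: "p \<in> polys B \<Longrightarrow> p \<in> Sm"
  unfolding Sm_def by blast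

lemma Sm_base: "b \<in> B \<Longrightarrow> b \<in> Sm"
  by (rule Sm_polys) (rule pbase)

lemma Sm_cong: "H \<in> Sm \<Longrightarrow> (\<And>z. z \<in> S \<Longrightarrow> K z = H z) \<Longrightarrow> K \<in> Sm"
  unfolding Sm_def by auto

lemma Sm_const[simp, intro]: "(\<lambda>z. c) \<in> Sm"
  by (rule Sm_polys) (rule pconst)

lemma Sm_add[intro]: "H \<in> Sm \<Longrightarrow> K \<in> Sm \<Longrightarrow> (\<lambda>z. H z + K z) \<in> Sm"
proof -
  assume "H \<in> Sm" "K \<in> Sm"
  then obtain p q where "p \<in> polys B" "\<forall>z\<in>S. H z = p z" "q \<in> polys B" "\<forall>z\<in>S. K z = q z"
    unfolding Sm_def by blast
  then show ?thesis unfolding Sm_def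
    by (intro CollectI bexI[of _ "\<lambda>z. p z + q z"] polys.padd) auto
qed

lemma Sm_mult[intro]: "H \<in> Sm \<Longrightarrow> K \<in> Sm \<Longrightarrow> (\<lambda>z. H z * K z) \<in> Sm"
proof -
  assume "H \<in> Sm" "K \<in> Sm"
  then obtain p q where "p \<in> polys B" "\<forall>z\<in>S. H z = p z" "q \<in> polys B" "\<forall>z\<in>S. K z = q z"
    unfolding Sm_def by blast
  then show ?thesis unfolding Sm_def
    by (intro CollectI bexI[of _ "\<lambda>z. p z * q z"] polys.pmult) auto
qed

lemma Sm_cmult[intro]: "H \<in> Sm \<Longrightarrow> (\<lambda>z. c * H z) \<in> Sm"
  by (rule Sm_mult[OF Sm_const])

lemma Sm_minus[intro]: "H \<in> Sm \<Longrightarrow> (\<lambda>z. - H z) \<in> Sm"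
  using Sm_cmult[of H "-1"] by simp

lemma Sm_diff[intro]: "H \<in> Sm \<Longrightarrow> K \<in> Sm \<Longrightarrow> (\<lambda>z. H z - K z) \<in> Sm"
  using Sm_add[OF _ Sm_minus, of H K] by simp

lemma Sm_sum[intro]: "finite A \<Longrightarrow> (\<And>i. i \<in> A \<Longrightarrow> f i \<in> Sm) \<Longrightarrow> (\<lambda>z. \<Sum>i\<in>A. f i z) \<in> Sm"
proof (induction A rule: finite_induct)
  case empty then show ?case by simp
next
  case (insert x F) then show ?case by (simp add: Sm_add)
qed

lemma Sm_prod[intro]: "finite A \<Longrightarrow> (\<And>i. i \<in> A \<Longrightarrow> f i \<in> Sm) \<Longrightarrow> (\<lambda>z. \<Prod>i\<in>A. f i z) \<in> Sm"
proof (induction A rule: finite_induct)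
  case empty then show ?case by simp
next
  case (insert x F) then show ?case by (simp add: Sm_mult)
qed

lemma Sm_cont: "H \<in> Sm \<Longrightarrow> continuous_on S H"
proof -
  assume "H \<in> Sm"
  then obtain p where p: "p \<in> polys B" "\<And>z. z \<in> S \<Longrightarrow> H z = p z" unfolding Sm_def by blast
  then show ?thesis using polys_props[OF cb p(1)] continuous_on_cong by fastforce
qed

lemma Sm_line_aux:
  assumes "H \<in> Sm"
  shows "\<exists>q\<in>polys B. \<forall>z\<in>S. ((\<lambda>s. H (z + s *\<^sub>R v)) has_real_derivative q z) (at 0)"
proof -
  obtain p where p: "p \<in> polys B" "\<And>z. z \<in> S \<Longrightarrow> H z = p z" using assms unfolding Sm_def by blast
  obtain q where q: "q \<in> polys B" "\<And>z. z \<in> S \<Longrightarrow> ((\<lambda>s. p (z + s *\<^sub>R v)) has_real_derivative q z) (at 0)"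
    using polys_props[OF cb p(1)] by blast
  have "\<forall>z\<in>S. ((\<lambda>s. H (z + s *\<^sub>R v)) has_real_derivative q z) (at 0)"
    using line_deriv_cong_open[OF openS _ p(2) q(2)] by blast
  then show ?thesis using q(1) by blast
qed

lemma Sm_line:
  assumes "H \<in> Sm" "z \<in> S"
  shows "((\<lambda>s. H (z + s *\<^sub>R v)) has_real_derivative dir_deriv v H z) (at 0)"
  using Sm_line_aux[OF assms(1), of v] assms(2) dd_line by metis

lemma Sm_dd[intro]:
  assumes "H \<in> Sm"
  shows "dir_deriv v H \<in> Sm"
proof -
  obtain q where q: "q \<in> polys B" "\<forall>z\<in>S. ((\<lambda>s. H (z + s *\<^sub>R v)) has_real_derivative q z) (at 0)"
    using Sm_line_aux[OF assms] by blast
  then show ?thesis unfolding Sm_def using dd_line by blast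
qed

lemma Sm_dds[intro]: "H \<in> Sm \<Longrightarrow> dir_derivs vs H \<in> Sm"
  by (induction vs) auto

lemma Sm_line_at:
  assumes "H \<in> Sm" "z + s0 *\<^sub>R v \<in> S"
  shows "((\<lambda>s. H (z + s *\<^sub>R v)) has_real_derivative dir_deriv v H (z + s0 *\<^sub>R v)) (at s0)"
  by (rule line_shift) (rule Sm_line[OF assms])

lemma Sm_smooth: "H \<in> Sm \<Longrightarrow> smooth_fun_on S H"
proof -
  assume H: "H \<in> Sm"
  have 1: "continuous_on S (dir_derivs vs H)" for vs using H by (intro Sm_cont Sm_dds)
  have 2: "(\<lambda>s. dir_derivs vs H (z + s *\<^sub>R v)) differentiable at 0" if z: "z \<in> S" for vs v z
    using Sm_line[OF Sm_dds[OF H] z] real_differentiable_def by blast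
  show ?thesis unfolding smooth_fun_on_def using openS 1 2 by blast
qed

lemma dd_add:
  assumes "H \<in> Sm" "K \<in> Sm" "z \<in> S"
  shows "dir_deriv v (\<lambda>x. H x + K x) z = dir_deriv v H z + dir_deriv v K z"
  by (rule dd_line) (rule DERIV_add[OF Sm_line[OF assms(1,3)] Sm_line[OF assms(2,3)]])

lemma dd_diff:
  assumes "H \<in> Sm" "K \<in> Sm" "z \<in> S"
  shows "dir_deriv v (\<lambda>x. H x - K x) z = dir_deriv v H z - dir_deriv v K z"
  by (rule dd_line) (rule DERIV_diff[OF Sm_line[OF assms(1,3)] Sm_line[OF assms(2,3)]])

lemma dd_mult:
  assumes "H \<in> Sm" "K \<in> Sm" "z \<in> S"
  shows "dir_deriv v (\<lambda>x. H x * K x) z = dir_deriv v H z * K z + H z * dir_deriv v K z"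
proof (rule dd_line)
  show "((\<lambda>s. H (z + s *\<^sub>R v) * K (z + s *\<^sub>R v)) has_real_derivative
      dir_deriv v H z * K z + H z * dir_deriv v K z) (at 0)"
    using DERIV_mult[OF Sm_line[OF assms(1,3), of v] Sm_line[OF assms(2,3), of v]] by (simp add: mult.commute)
qed

lemma dd_const: "dir_deriv v (\<lambda>x. c) z = 0"
  by (rule dd_line) simp

lemma dd_cmult:
  assumes "H \<in> Sm" "z \<in> S"
  shows "dir_deriv v (\<lambda>x. c * H x) z = c * dir_deriv v H z"
  by (rule dd_line) (rule DERIV_cmult[OF Sm_line[OF assms]])

lemma dd_sum:
  assumes "finite A" "\<And>i. i \<in> A \<Longrightarrow> f i \<in> Sm" "z \<in> S"
  shows "dir_deriv v (\<lambda>x. \<Sum>i\<in>A. f i x) z = (\<Sum>i\<in>A. dir_deriv v (f i) z)"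
proof (rule dd_line)
  show "((\<lambda>s. \<Sum>i\<in>A. f i (z + s *\<^sub>R v)) has_real_derivative (\<Sum>i\<in>A. dir_deriv v (f i) z)) (at 0)"
    by (rule DERIV_sum) (rule Sm_line[OF assms(2) assms(3)])
qed

section \<open>Symmetry of mixed directional derivatives\<close>

lemma clairaut:
  assumes H: "H \<in> Sm" and z: "z \<in> S"
  shows "dir_deriv u (dir_deriv v H) z = dir_deriv v (dir_deriv u H) z"
proof (rule ccontr)
  let ?A = "dir_deriv u (dir_deriv v H)" and ?B = "dir_deriv v (dir_deriv u H)"
  assume ne: "?A z \<noteq> ?B z"
  define e where "e = \<bar>?A z - ?B z\<bar> / 2"
  have e: "e > 0" using ne by (simp add: e_def)
  have cA: "continuous_on S ?A" and cB: "continuous_on S ?B" using H by (auto intro!: Sm_cont)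
  obtain dA where dA: "dA > 0" "\<And>y. y \<in> S \<Longrightarrow> dist y z < dA \<Longrightarrow> dist (?A y) (?A z) < e"
    using cA z e unfolding continuous_on_iff by blast
  obtain dB where dB: "dB > 0" "\<And>y. y \<in> S \<Longrightarrow> dist y z < dB \<Longrightarrow> dist (?B y) (?B z) < e"
    using cB z e unfolding continuous_on_iff by blast
  obtain r where r: "r > 0" "ball z r \<subseteq> S" using openS z open_contains_ball by blast
  define d where "d = Min {dA, dB, r}"
  have d: "d > 0" "d \<le> dA" "d \<le> dB" "d \<le> r" using dA dB r by (auto simp: d_def)
  define h where "h = d / (2 * (norm u + norm v + 1))"
  have den: "2 * (norm u + norm v + 1) > 0"
    by (smt (verit) norm_ge_zero)
  have h: "h > 0" unfolding h_def using d(1) den by (rule divide_pos_pos)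
  have close: "norm (a *\<^sub>R u + b *\<^sub>R v) < d" if "0 \<le> a" "a \<le> h" "0 \<le> b" "b \<le> h" for a b
  proof -
    have "norm (a *\<^sub>R u + b *\<^sub>R v) \<le> a * norm u + b * norm v"
      using that norm_triangle_ineq[of "a *\<^sub>R u" "b *\<^sub>R v"] by simp
    also have "\<dots> \<le> h * norm u + h * norm v"
      using that by (intro add_mono mult_right_mono) auto
    also have "\<dots> < h * (2 * (norm u + norm v + 1))"
    proof -
      have a: "0 \<le> h * norm u" "0 \<le> h * norm v" using h by simp_all
      have "h * (2 * (norm u + norm v + 1)) = 2 * (h * norm u) + 2 * (h * norm v) + 2 * h"
        by (simp add: algebra_simps)
      then show ?thesis using a h by linarith
    qed
    also have "\<dots> = d" unfolding h_def using den by simp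
    finally show ?thesis .
  qed
  have inS: "z + a *\<^sub>R u + b *\<^sub>R v \<in> S" if "0 \<le> a" "a \<le> h" "0 \<le> b" "b \<le> h" for a b
  proof -
    have "dist (z + a *\<^sub>R u + b *\<^sub>R v) z < r"
      using close[OF that] d by (simp add: dist_norm add.assoc)
    then show ?thesis using r by (auto simp: dist_commute)
  qed
  have near: "dist (z + a *\<^sub>R u + b *\<^sub>R v) z < d" if "0 \<le> a" "a \<le> h" "0 \<le> b" "b \<le> h" for a b
    using close[OF that] by (simp add: dist_norm add.assoc)
  define \<Delta> where "\<Delta> = H (z + h *\<^sub>R u + h *\<^sub>R v) - H (z + h *\<^sub>R u) - H (z + h *\<^sub>R v) + H z"
  text \<open>Mean value theorem, first in u then in v.\<close>
  have key: "\<exists>a b. 0 < a \<and> a < h \<and> 0 < b \<and> b < h \<and> \<Delta> = h * h * dir_deriv V (dir_deriv U H) (z + a *\<^sub>R U + b *\<^sub>R V)"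
    if HS: "H \<in> Sm" and sym: "\<Delta> = H (z + h *\<^sub>R U + h *\<^sub>R V) - H (z + h *\<^sub>R U) - H (z + h *\<^sub>R V) + H z"
    and inS': "\<And>a b. 0 \<le> a \<Longrightarrow> a \<le> h \<Longrightarrow> 0 \<le> b \<Longrightarrow> b \<le> h \<Longrightarrow> z + a *\<^sub>R U + b *\<^sub>R V \<in> S"
    for H U V
  proof -
    have "\<exists>a. 0 < a \<and> a < h \<and>
      (\<lambda>s. H (z + h *\<^sub>R V + s *\<^sub>R U) - H (z + s *\<^sub>R U)) h - (\<lambda>s. H (z + h *\<^sub>R V + s *\<^sub>R U) - H (z + s *\<^sub>R U)) 0
        = (h - 0) * (dir_deriv U H (z + h *\<^sub>R V + a *\<^sub>R U) - dir_deriv U H (z + a *\<^sub>R U))"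
    proof (rule MVT2)
      show "0 < h" by (rule h)
      fix x assume x: "0 \<le> x" "x \<le> h"
      show "((\<lambda>s. H (z + h *\<^sub>R V + s *\<^sub>R U) - H (z + s *\<^sub>R U)) has_real_derivative
          (dir_deriv U H (z + h *\<^sub>R V + x *\<^sub>R U) - dir_deriv U H (z + x *\<^sub>R U))) (at x)"
      proof (intro DERIV_diff Sm_line_at HS)
        show "z + h *\<^sub>R V + x *\<^sub>R U \<in> S" using inS'[of x h] x h by (simp add: algebra_simps)
        show "z + x *\<^sub>R U \<in> S" using inS'[of x 0] x h by simp
      qed
    qed
    then obtain a where a: "0 < a" "a < h"
      "\<Delta> = h * (dir_deriv U H (z + h *\<^sub>R V + a *\<^sub>R U) - dir_deriv U H (z + a *\<^sub>R U))"
      using sym by (auto simp: algebra_simps)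
    have "\<exists>b. 0 < b \<and> b < h \<and>
      (\<lambda>s. dir_deriv U H (z + a *\<^sub>R U + s *\<^sub>R V)) h - (\<lambda>s. dir_deriv U H (z + a *\<^sub>R U + s *\<^sub>R V)) 0
        = (h - 0) * dir_deriv V (dir_deriv U H) (z + a *\<^sub>R U + b *\<^sub>R V)"
    proof (rule MVT2)
      show "0 < h" by (rule h)
      fix x assume x: "0 \<le> x" "x \<le> h"
      show "((\<lambda>s. dir_deriv U H (z + a *\<^sub>R U + s *\<^sub>R V)) has_real_derivative
          dir_deriv V (dir_deriv U H) (z + a *\<^sub>R U + x *\<^sub>R V)) (at x)"
        by (rule Sm_line_at) (use HS inS'[of a x] a x in auto)
    qed
    then obtain b where b: "0 < b" "b < h"
      "dir_deriv U H (z + a *\<^sub>R U + h *\<^sub>R V) - dir_deriv U H (z + a *\<^sub>R U)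
        = h * dir_deriv V (dir_deriv U H) (z + a *\<^sub>R U + b *\<^sub>R V)"
      by auto
    have "\<Delta> = h * h * dir_deriv V (dir_deriv U H) (z + a *\<^sub>R U + b *\<^sub>R V)"
      using a(3) b(3) by (simp add: algebra_simps)
    then show ?thesis using a b by blast
  qed
  obtain a b where ab: "0 < a" "a < h" "0 < b" "b < h"
    "\<Delta> = h * h * ?B (z + a *\<^sub>R u + b *\<^sub>R v)"
    using key[OF H \<Delta>_def inS] by blast
  obtain a' b' where ab': "0 < a'" "a' < h" "0 < b'" "b' < h"
    "\<Delta> = h * h * ?A (z + a' *\<^sub>R v + b' *\<^sub>R u)"
  proof -
    have inS2: "\<And>a b. 0 \<le> a \<Longrightarrow> a \<le> h \<Longrightarrow> 0 \<le> b \<Longrightarrow> b \<le> h \<Longrightarrow> z + a *\<^sub>R v + b *\<^sub>R u \<in> S"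
    proof -
      fix a b assume "0 \<le> a" "a \<le> h" "0 \<le> b" "b \<le> h"
      then have "z + b *\<^sub>R u + a *\<^sub>R v \<in> S" by (intro inS)
      then show "z + a *\<^sub>R v + b *\<^sub>R u \<in> S" by (simp add: algebra_simps)
    qed
    have "\<Delta> = H (z + h *\<^sub>R v + h *\<^sub>R u) - H (z + h *\<^sub>R v) - H (z + h *\<^sub>R u) + H z"
      unfolding \<Delta>_def by (simp add: algebra_simps)
    then have "\<exists>a b. 0 < a \<and> a < h \<and> 0 < b \<and> b < h \<and> \<Delta> = h * h * ?A (z + a *\<^sub>R v + b *\<^sub>R u)"
      by (rule key[OF H _ inS2])
    then show ?thesis using that by blast
  qed
  have eq: "?B (z + a *\<^sub>R u + b *\<^sub>R v) = ?A (z + b' *\<^sub>R u + a' *\<^sub>R v)"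
    using ab(5) ab'(5) h by (simp add: algebra_simps)
  have p1: "z + a *\<^sub>R u + b *\<^sub>R v \<in> S" by (rule inS) (use ab in auto)
  have p1': "dist (z + a *\<^sub>R u + b *\<^sub>R v) z < dB" using near[of a b] ab d by auto
  have p2: "z + b' *\<^sub>R u + a' *\<^sub>R v \<in> S" by (rule inS) (use ab' in auto)
  have p2': "dist (z + b' *\<^sub>R u + a' *\<^sub>R v) z < dA" using near[of b' a'] ab' d by auto
  have "dist (?B (z + a *\<^sub>R u + b *\<^sub>R v)) (?B z) < e"
    using dB(2)[OF p1 p1'] .
  moreover have "dist (?A (z + b' *\<^sub>R u + a' *\<^sub>R v)) (?A z) < e"
    using dA(2)[OF p2 p2'] .
  ultimately have "dist (?A z) (?B z) < 2 * e"
    using eq dist_triangle[of "?A z" "?B z" "?B (z + a *\<^sub>R u + b *\<^sub>R v)"]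
    by (simp add: dist_commute)
  then show False unfolding e_def by (simp add: dist_real_def)
qed

end


lemma pdx_dd: "pdx k F x = dir_deriv (axis k 1) F x"
  by (simp add: pdx_def dir_deriv_def)

lemma axis_nth1: "axis k (1::real) $ q = (if q = k then 1 else 0)"
  by (simp add: axis_def)

definition fd :: "('n::finite \<Rightarrow> 'n \<Rightarrow> real) \<Rightarrow> 'n \<Rightarrow> real^'n \<Rightarrow> real" where
  "fd a k y = (\<Sum>q\<in>UNIV. a k q * (y $ q)^2) + 2 * y $ k * (\<Sum>r\<in>UNIV. a r k * y $ r)"

lemma pdx_cubic: "pdx k (cubic_f a) y = fd a k y"
proof -
  let ?e = "axis k (1::real)"
  have "((\<lambda>s. cubic_f a (y + s *\<^sub>R ?e)) has_real_derivative fd a k y) (at 0)"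
  proof -
    have e: "(y + s *\<^sub>R ?e) $ q = y $ q + s * (if q = k then 1 else 0)" for s q
      by (simp add: axis_nth1)
    have "((\<lambda>s. \<Sum>r\<in>UNIV. \<Sum>q\<in>UNIV. a r q * (y $ r + s * (if r = k then 1 else 0)) *
                  (y $ q + s * (if q = k then 1 else 0))^2) has_real_derivative
          (\<Sum>r\<in>UNIV. \<Sum>q\<in>UNIV. a r q * ((if r = k then 1 else 0) * (y $ q)^2 +
               y $ r * (2 * y $ q * (if q = k then 1 else 0))))) (at 0)"
      by (auto intro!: derivative_eq_intros simp: power2_eq_square algebra_simps)
    moreover have "(\<Sum>r\<in>UNIV. \<Sum>q\<in>UNIV. a r q * ((if r = k then 1 else 0) * (y $ q)^2 +
               y $ r * (2 * y $ q * (if q = k then 1 else 0)))) = fd a k y"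
    proof -
      have "(\<Sum>r\<in>UNIV. \<Sum>q\<in>UNIV. a r q * ((if r = k then 1 else 0) * (y $ q)^2 +
               y $ r * (2 * y $ q * (if q = k then 1 else 0)))) =
            (\<Sum>r\<in>UNIV. (if r = k then (\<Sum>q\<in>UNIV. a r q * (y $ q)^2) else 0) +
               2 * y $ k * (a r k * y $ r))"
      proof (intro sum.cong refl)
        fix r
        have "(\<Sum>q\<in>UNIV. a r q * ((if r = k then 1 else 0) * (y $ q)^2 +
               y $ r * (2 * y $ q * (if q = k then 1 else 0)))) =
              (\<Sum>q\<in>UNIV. (if r = k then a r q * (y $ q)^2 else 0) +
               (if q = k then 2 * y $ k * (a r k * y $ r) else 0))"
          by (intro sum.cong refl) (auto simp: algebra_simps)
        also have "\<dots> = (if r = k then (\<Sum>q\<in>UNIV. a r q * (y $ q)^2) else 0) +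
               2 * y $ k * (a r k * y $ r)"
          by (simp add: sum.distrib)
        finally show "(\<Sum>q\<in>UNIV. a r q * ((if r = k then 1 else 0) * (y $ q)^2 +
               y $ r * (2 * y $ q * (if q = k then 1 else 0)))) =
              (if r = k then (\<Sum>q\<in>UNIV. a r q * (y $ q)^2) else 0) +
               2 * y $ k * (a r k * y $ r)" .
      qed
      also have "\<dots> = fd a k y"
        by (simp add: sum.distrib fd_def sum_distrib_left)
      finally show ?thesis .
    qed
    ultimately show ?thesis
      unfolding cubic_f_def e by simp
  qed
  then show ?thesis unfolding pdx_dd by (rule dd_line)
qed

lemma inv_props:
  fixes A :: "real^'n::finite^'n"
  assumes "det A \<noteq> 0"
  shows "A ** matrix_inv A = mat 1 \<and> matrix_inv A ** A = mat 1"
proof -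
  have "invertible A" using assms invertible_det_nz by blast
  then show ?thesis unfolding invertible_def matrix_inv_def by (rule someI_ex)
qed

lemma inv_entry:
  fixes A :: "real^'n::finite^'n"
  assumes d: "det A \<noteq> 0"
  shows "matrix_inv A $ k $ j = det (\<chi> p q. if q = k then (if p = j then 1 else 0) else A $ p $ q) / det A"
proof -
  let ?x = "matrix_inv A *v axis j 1"
  have "A *v ?x = axis j 1"
    using inv_props[OF d] by (simp add: matrix_vector_mul_assoc)
  then have "?x = (\<chi> k. det (\<chi> p q. if q = k then axis j 1 $ p else A $ p $ q) / det A)"
    using cramer[OF d] by blast
  moreover have "?x $ k = matrix_inv A $ k $ j"
    by (simp add: matrix_vector_mult_def axis_def if_distrib cong: if_cong)
  moreover have "(\<chi> p q. if q = k then axis j 1 $ p else A $ p $ q) =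
      (\<chi> p q. if q = k then (if p = j then 1 else 0) else A $ p $ q)"
    by (simp add: vec_eq_iff axis_def)
  ultimately show ?thesis by simp
qed

lemma det_polys:
  assumes "\<And>p q. (\<lambda>z. M z $ p $ q) \<in> polys B"
  shows "(\<lambda>z. det (M z :: real^'n::finite^'n)) \<in> polys B"
  unfolding det_def
proof (rule polys_sum)
  show "finite {p. p permutes (UNIV::'n set)}" by (simp add: finite_permutations)
  fix p
  show "(\<lambda>z. of_int (sign p) * (\<Prod>i\<in>UNIV. M z $ i $ p i)) \<in> polys B"
    by (rule polys.pmult[OF polys.pconst polys_prod]) (use assms in auto)
qed

context smalg
begin

lemma det_Sm:
  assumes "\<And>p q. (\<lambda>z. M z $ p $ q) \<in> Sm"
  shows "(\<lambda>z. det (M z :: real^'n::finite^'n)) \<in> Sm"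
  unfolding det_def
proof (rule Sm_sum)
  show "finite {p. p permutes (UNIV::'n set)}" by (simp add: finite_permutations)
  fix p
  show "(\<lambda>z. of_int (sign p) * (\<Prod>i\<in>UNIV. M z $ i $ p i)) \<in> Sm"
    by (rule Sm_mult[OF Sm_const Sm_prod]) (use assms in auto)
qed

lemma inv_Sm:
  assumes M: "\<And>p q. (\<lambda>z. M z $ p $ q) \<in> Sm"
    and d: "(\<lambda>z. 1 / det (M z)) \<in> Sm" and nz: "\<And>z. z \<in> S \<Longrightarrow> det (M z :: real^'n::finite^'n) \<noteq> 0"
  shows "(\<lambda>z. matrix_inv (M z) $ k $ j) \<in> Sm"
proof (rule Sm_cong)
  let ?C = "\<lambda>z. det (\<chi> p q. if q = k then (if p = j then 1 else 0) else M z $ p $ q)"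
  have "?C \<in> Sm"
  proof (rule det_Sm)
    fix p q
    show "(\<lambda>z. (\<chi> p q. if q = k then (if p = j then 1 else 0) else M z $ p $ q) $ p $ q) \<in> Sm"
      using M by (cases "q = k") auto
  qed
  then show "(\<lambda>z. ?C z * (1 / det (M z))) \<in> Sm" using d by (rule Sm_mult)
  fix z assume "z \<in> S"
  then show "matrix_inv (M z) $ k $ j = ?C z * (1 / det (M z))"
    using inv_entry[OF nz] by simp
qed

end

definition B2a :: "(real^'n::finite \<Rightarrow> real) set" where
  "B2a = range (\<lambda>q y. y $ q)"

lemma closed_B2a: "closed_base (B2a :: (real^'n::finite \<Rightarrow> real) set) UNIV"
  unfolding closed_base_def B2a_def
proof (intro ballI conjI allI)
  fix b :: "real^'n \<Rightarrow> real" and v :: "real^'n"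
  assume "b \<in> range (\<lambda>q y. y $ q)"
  then obtain q where b: "b = (\<lambda>y. y $ q)" by blast
  show "continuous_on UNIV b" unfolding b by (intro continuous_intros)
  have "\<forall>z\<in>UNIV. ((\<lambda>s. b (z + s *\<^sub>R v)) has_real_derivative (\<lambda>z. v $ q) z) (at 0)"
    unfolding b by (auto intro!: derivative_eq_intros)
  then show "\<exists>r\<in>polys (range (\<lambda>q y. y $ q)). \<forall>z\<in>UNIV. ((\<lambda>s. b (z + s *\<^sub>R v)) has_real_derivative r z) (at 0)"
    by (intro bexI[of _ "\<lambda>z. v $ q"] polys.pconst) simp
qed

lemma coord_polys: "(\<lambda>y. y $ q) \<in> polys B2a"
  unfolding B2a_def by (rule polys.pbase) blast

lemma fd_polys: "fd a k \<in> polys B2a"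
proof -
  have "(\<lambda>y. (\<Sum>q\<in>UNIV. a k q * ((y $ q) * (y $ q))) + 2 * y $ k * (\<Sum>r\<in>UNIV. a r k * y $ r)) \<in> polys B2a"
    by (intro polys.padd polys.pmult polys_sum polys.pconst coord_polys) simp_all
  moreover have "fd a k = (\<lambda>y. (\<Sum>q\<in>UNIV. a k q * ((y $ q) * (y $ q))) + 2 * y $ k * (\<Sum>r\<in>UNIV. a r k * y $ r))"
    by (simp add: fd_def fun_eq_iff power2_eq_square)
  ultimately show ?thesis by simp
qed

definition GMx :: "('n::finite \<Rightarrow> 'n \<Rightarrow> real) \<Rightarrow> real^'n \<Rightarrow> real^'n^'n" where
  "GMx a y = (\<chi> i j. (if i = j then 1 else 0) + fd a i y * fd a j y)"

lemma graph_metric_GMx: "graph_metric (cubic_f a) y = GMx a y"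
  by (simp add: graph_metric_def GMx_def pdx_cubic)

lemma GMx_polys: "(\<lambda>y. GMx a y $ i $ j) \<in> polys B2a"
proof -
  have "(\<lambda>y. GMx a y $ i $ j) = (\<lambda>y. (if i = j then 1 else 0) + fd a i y * fd a j y)"
    by (simp add: GMx_def fun_eq_iff)
  moreover have "(\<lambda>y. (if i = j then 1 else 0) + fd a i y * fd a j y) \<in> polys B2a"
    by (intro polys.padd polys.pmult polys.pconst fd_polys)
  ultimately show ?thesis by simp
qed

lemma GMx_mult: "(GMx a y *v x) $ i = x $ i + fd a i y * (\<Sum>j\<in>UNIV. fd a j y * x $ j)"
proof -
  have "(GMx a y *v x) $ i = (\<Sum>j\<in>UNIV. (if i = j then x $ j else 0) + fd a i y * (fd a j y * x $ j))"
    unfolding GMx_def matrix_vector_mult_def by (simp add: algebra_simps, intro sum.cong refl) auto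
  also have "\<dots> = x $ i + fd a i y * (\<Sum>j\<in>UNIV. fd a j y * x $ j)"
    by (simp add: sum.distrib sum_distrib_left)
  finally show ?thesis .
qed

lemma det_GMx_nz: "det (GMx a y) \<noteq> 0"
proof -
  have inj: "inj ((*v) (GMx a y))"
  proof (rule injI)
    fix x x' assume eq: "GMx a y *v x = GMx a y *v x'"
    define w where "w = x - x'"
    have w0: "GMx a y *v w = 0"
      using eq by (simp add: w_def matrix_vector_mult_diff_distrib)
    have "w \<bullet> (GMx a y *v w) = (\<Sum>i\<in>UNIV. (w $ i)^2) + (\<Sum>j\<in>UNIV. fd a j y * w $ j)^2"
      by (simp add: inner_vec_def GMx_mult algebra_simps sum.distrib power2_eq_square sum_distrib_left
          sum_distrib_right)
    then have "(\<Sum>i\<in>UNIV. (w $ i)^2) + (\<Sum>j\<in>UNIV. fd a j y * w $ j)^2 = 0" using w0 by simp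
    then have "(\<Sum>i\<in>UNIV. (w $ i)^2) = 0"
      by (smt (verit) sum_nonneg zero_le_power2)
    then have "\<forall>i\<in>UNIV. (w $ i)^2 = 0"
      using sum_nonneg_eq_0_iff[of UNIV "\<lambda>i. (w $ i)^2"] by simp
    then have "w = 0" by (simp add: vec_eq_iff)
    then show "x = x'" by (simp add: w_def)
  qed
  then have "invertible (GMx a y)"
    using matrix_left_invertible_injective invertible_left_inverse by blast
  then show ?thesis using invertible_det_nz by blast
qed

definition B2 :: "('n::finite \<Rightarrow> 'n \<Rightarrow> real) \<Rightarrow> (real^'n \<Rightarrow> real) set" where
  "B2 a = insert (\<lambda>y. 1 / det (GMx a y)) B2a"

lemma closed_B2: "closed_base (B2 a) UNIV"
  unfolding B2_def
  by (rule closed_base_inverse[OF closed_B2a det_polys[OF GMx_polys]]) (rule det_GMx_nz)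

section \<open>Algebras on the whole space: vanishing orders at 0\<close>

locale smalgU = smalg UNIV B for B :: "('a::real_normed_vector \<Rightarrow> real) set"
begin

lemma ddf_add: "H \<in> Sm \<Longrightarrow> K \<in> Sm \<Longrightarrow> dir_deriv v (\<lambda>x. H x + K x) = (\<lambda>x. dir_deriv v H x + dir_deriv v K x)"
  by (rule ext) (rule dd_add, auto)

lemma ddf_diff: "H \<in> Sm \<Longrightarrow> K \<in> Sm \<Longrightarrow> dir_deriv v (\<lambda>x. H x - K x) = (\<lambda>x. dir_deriv v H x - dir_deriv v K x)"
  by (rule ext) (rule dd_diff, auto)

lemma ddf_mult: "H \<in> Sm \<Longrightarrow> K \<in> Sm \<Longrightarrow> dir_deriv v (\<lambda>x. H x * K x) = (\<lambda>x. dir_deriv v H x * K x + H x * dir_deriv v K x)"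
  by (rule ext) (rule dd_mult, auto)

lemma ddf_cmult: "H \<in> Sm \<Longrightarrow> dir_deriv v (\<lambda>x. c * H x) = (\<lambda>x. c * dir_deriv v H x)"
  by (rule ext) (rule dd_cmult, auto)

lemma ddf_const: "dir_deriv v (\<lambda>x. c) = (\<lambda>x. 0)"
  by (rule ext) (rule dd_const)

lemma ddf_sum: "finite A \<Longrightarrow> (\<And>i. i \<in> A \<Longrightarrow> f i \<in> Sm) \<Longrightarrow>
    dir_deriv v (\<lambda>x. \<Sum>i\<in>A. f i x) = (\<lambda>x. \<Sum>i\<in>A. dir_deriv v (f i) x)"
  by (rule ext) (rule dd_sum, auto)

lemma dds_add: "H \<in> Sm \<Longrightarrow> K \<in> Sm \<Longrightarrow> dir_derivs vs (\<lambda>x. H x + K x) = (\<lambda>x. dir_derivs vs H x + dir_derivs vs K x)"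
proof (induction vs)
  case Nil then show ?case by simp
next
  case (Cons v vs)
  then show ?case by (simp add: ddf_add Sm_dds)
qed

lemma dds_cmult: "H \<in> Sm \<Longrightarrow> dir_derivs vs (\<lambda>x. c * H x) = (\<lambda>x. c * dir_derivs vs H x)"
proof (induction vs)
  case Nil then show ?case by simp
next
  case (Cons v vs)
  then show ?case by (simp add: ddf_cmult Sm_dds)
qed

lemma dds_diff: "H \<in> Sm \<Longrightarrow> K \<in> Sm \<Longrightarrow> dir_derivs vs (\<lambda>x. H x - K x) = (\<lambda>x. dir_derivs vs H x - dir_derivs vs K x)"
proof (induction vs)
  case Nil then show ?case by simp
next
  case (Cons v vs)
  then show ?case by (simp add: ddf_diff Sm_dds)
qed

lemma dds_sum: "finite A \<Longrightarrow> (\<And>i. i \<in> A \<Longrightarrow> f i \<in> Sm) \<Longrightarrow>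
    dir_derivs vs (\<lambda>x. \<Sum>i\<in>A. f i x) = (\<lambda>x. \<Sum>i\<in>A. dir_derivs vs (f i) x)"
proof (induction vs)
  case Nil then show ?case by simp
next
  case (Cons v vs)
  then show ?case by (simp add: ddf_sum Sm_dds)
qed

definition ordv :: "('a \<Rightarrow> real) \<Rightarrow> nat \<Rightarrow> bool" where
  "ordv H k \<longleftrightarrow> (\<forall>vs. length vs < k \<longrightarrow> dir_derivs vs H 0 = 0)"

lemma ordvD: "ordv H k \<Longrightarrow> length vs < k \<Longrightarrow> dir_derivs vs H 0 = 0"
  unfolding ordv_def by blast

lemma ordv_0[simp]: "ordv H 0"
  unfolding ordv_def by simp

lemma ordv_mono: "ordv H k \<Longrightarrow> m \<le> k \<Longrightarrow> ordv H m"
  unfolding ordv_def by (meson less_le_trans)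

lemma ordv_dd: "ordv H k \<Longrightarrow> ordv (dir_deriv v H) (k - 1)"
  unfolding ordv_def
proof (intro allI impI)
  fix vs :: "'a list" assume H: "\<forall>vs. length vs < k \<longrightarrow> dir_derivs vs H 0 = 0" and l: "length vs < k - 1"
  have "length (vs @ [v]) < k" using l by simp
  then have "dir_derivs (vs @ [v]) H 0 = 0" using H by blast
  then show "dir_derivs vs (dir_deriv v H) 0 = 0" by (simp add: dir_derivs_append)
qed

lemma ordv_add: "H \<in> Sm \<Longrightarrow> K \<in> Sm \<Longrightarrow> ordv H k \<Longrightarrow> ordv K k \<Longrightarrow> ordv (\<lambda>x. H x + K x) k"
  unfolding ordv_def
proof (intro allI impI)
  fix vs :: "'a list"
  assume "H \<in> Sm" "K \<in> Sm" "\<forall>vs. length vs < k \<longrightarrow> dir_derivs vs H 0 = 0" "\<forall>vs. length vs < k \<longrightarrow> dir_derivs vs K 0 = 0"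
    "length vs < k"
  then show "dir_derivs vs (\<lambda>x. H x + K x) 0 = 0" unfolding dds_add[OF \<open>H \<in> Sm\<close> \<open>K \<in> Sm\<close>] by simp
qed

lemma ordv_diff: "H \<in> Sm \<Longrightarrow> K \<in> Sm \<Longrightarrow> ordv H k \<Longrightarrow> ordv K k \<Longrightarrow> ordv (\<lambda>x. H x - K x) k"
  unfolding ordv_def
proof (intro allI impI)
  fix vs :: "'a list"
  assume "H \<in> Sm" "K \<in> Sm" "\<forall>vs. length vs < k \<longrightarrow> dir_derivs vs H 0 = 0" "\<forall>vs. length vs < k \<longrightarrow> dir_derivs vs K 0 = 0"
    "length vs < k"
  then show "dir_derivs vs (\<lambda>x. H x - K x) 0 = 0" unfolding dds_diff[OF \<open>H \<in> Sm\<close> \<open>K \<in> Sm\<close>] by simp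
qed

lemma ordv_cmult: "H \<in> Sm \<Longrightarrow> ordv H k \<Longrightarrow> ordv (\<lambda>x. c * H x) k"
  unfolding ordv_def
proof (intro allI impI)
  fix vs :: "'a list"
  assume "H \<in> Sm" "\<forall>vs. length vs < k \<longrightarrow> dir_derivs vs H 0 = 0" "length vs < k"
  then show "dir_derivs vs (\<lambda>x. c * H x) 0 = 0" unfolding dds_cmult[OF \<open>H \<in> Sm\<close>] by simp
qed

lemma ordv_sum: "finite A \<Longrightarrow> (\<And>i. i \<in> A \<Longrightarrow> f i \<in> Sm) \<Longrightarrow> (\<And>i. i \<in> A \<Longrightarrow> ordv (f i) k) \<Longrightarrow>
   ordv (\<lambda>x. \<Sum>i\<in>A. f i x) k"
  unfolding ordv_def
proof (intro allI impI)
  fix vs :: "'a list"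
  assume fin: "finite A" and fS: "\<And>i. i \<in> A \<Longrightarrow> f i \<in> Sm"
    and o: "\<And>i. i \<in> A \<Longrightarrow> \<forall>vs. length vs < k \<longrightarrow> dir_derivs vs (f i) 0 = 0"
    and l: "length vs < k"
  have "dir_derivs vs (\<lambda>x. \<Sum>i\<in>A. f i x) = (\<lambda>x. \<Sum>i\<in>A. dir_derivs vs (f i) x)"
    by (rule dds_sum[OF fin fS])
  then show "dir_derivs vs (\<lambda>x. \<Sum>i\<in>A. f i x) 0 = 0" using o l by simp
qed

lemma ordv_mult_aux:
  "\<forall>H K k m vs. H \<in> Sm \<longrightarrow> K \<in> Sm \<longrightarrow> ordv H k \<longrightarrow> ordv K m \<longrightarrow> length vs = n \<longrightarrow> n < k + m \<longrightarrow>
     dir_derivs vs (\<lambda>x. H x * K x) 0 = 0"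
proof (induction n)
  case 0
  show ?case
  proof (intro allI impI)
    fix H K k m and vs :: "'a list"
    assume H: "H \<in> Sm" "K \<in> Sm" "ordv H k" "ordv K m" "length vs = 0" "0 < k + m"
    have "H 0 = 0 \<or> K 0 = 0"
    proof (cases "0 < k")
      case True then show ?thesis using ordvD[OF H(3), of "[]"] by simp
    next
      case False then have "0 < m" using H(6) by simp
      then show ?thesis using ordvD[OF H(4), of "[]"] by simp
    qed
    then show "dir_derivs vs (\<lambda>x. H x * K x) 0 = 0" using H(5) by auto
  qed
next
  case (Suc n)
  show ?case
  proof (intro allI impI)
    fix H K k m and vs :: "'a list"
    assume H: "H \<in> Sm" "K \<in> Sm" "ordv H k" "ordv K m" "length vs = Suc n" "Suc n < k + m"
    obtain us v where vs: "vs = us @ [v]" and lus: "length us = n" using H(5)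
      by (auto simp: length_Suc_conv_rev)
    have "dir_derivs vs (\<lambda>x. H x * K x) =
        dir_derivs us (\<lambda>x. dir_deriv v H x * K x + H x * dir_deriv v K x)"
      unfolding vs dir_derivs_append using H(1,2) by (simp add: ddf_mult)
    also have "\<dots> = (\<lambda>x. dir_derivs us (\<lambda>x. dir_deriv v H x * K x) x +
                      dir_derivs us (\<lambda>x. H x * dir_deriv v K x) x)"
      using H(1,2) by (intro dds_add Sm_mult Sm_dd)
    finally have eq: "dir_derivs vs (\<lambda>x. H x * K x) 0 =
        dir_derivs us (\<lambda>x. dir_deriv v H x * K x) 0 + dir_derivs us (\<lambda>x. H x * dir_deriv v K x) 0"
      by simp
    have n1: "n < (k - 1) + m" using H(6) by linarith
    have n2: "n < k + (m - 1)" using H(6) by linarith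
    have 1: "dir_derivs us (\<lambda>x. dir_deriv v H x * K x) 0 = 0"
      by (rule Suc.IH[rule_format, OF Sm_dd[OF H(1)] H(2) ordv_dd[OF H(3)] H(4) lus n1])
    have 2: "dir_derivs us (\<lambda>x. H x * dir_deriv v K x) 0 = 0"
      by (rule Suc.IH[rule_format, OF H(1) Sm_dd[OF H(2)] H(3) ordv_dd[OF H(4)] lus n2])
    show "dir_derivs vs (\<lambda>x. H x * K x) 0 = 0" using eq 1 2 by simp
  qed
qed

lemma ordv_mult: "H \<in> Sm \<Longrightarrow> K \<in> Sm \<Longrightarrow> ordv H k \<Longrightarrow> ordv K m \<Longrightarrow> ordv (\<lambda>x. H x * K x) (k + m)"
  unfolding ordv_def[of "\<lambda>x. H x * K x"]
proof (intro allI impI)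
  fix vs :: "'a list"
  assume "H \<in> Sm" "K \<in> Sm" "ordv H k" "ordv K m" "length vs < k + m"
  then show "dir_derivs vs (\<lambda>x. H x * K x) 0 = 0"
    using ordv_mult_aux[of "length vs", rule_format, of H K k m vs] by simp
qed

lemma L4:
  assumes H: "H \<in> Sm" "ordv H 2" and K: "K \<in> Sm" "ordv K 2"
  shows "dir_derivs [a, b, c, d] (\<lambda>x. H x * K x) 0 =
    dir_derivs [c, d] H 0 * dir_derivs [a, b] K 0 + dir_derivs [b, d] H 0 * dir_derivs [a, c] K 0 +
    dir_derivs [a, d] H 0 * dir_derivs [b, c] K 0 + dir_derivs [b, c] H 0 * dir_derivs [a, d] K 0 +
    dir_derivs [a, c] H 0 * dir_derivs [b, d] K 0 + dir_derivs [a, b] H 0 * dir_derivs [c, d] K 0"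
proof -
  have H0: "H 0 = 0" "\<And>v. dir_deriv v H 0 = 0"
    using ordvD[OF H(2), of "[]"] ordvD[OF H(2), of "[v]" for v] by auto
  have K0: "K 0 = 0" "\<And>v. dir_deriv v K 0 = 0"
    using ordvD[OF K(2), of "[]"] ordvD[OF K(2), of "[v]" for v] by auto
  note S = Sm_dd Sm_mult Sm_add H(1) K(1)
  have e3: "dir_derivs [b, c, d] (\<lambda>x. H x * K x) = (\<lambda>x.
     dir_deriv b (dir_deriv c (dir_deriv d H)) x * K x + dir_deriv c (dir_deriv d H) x * dir_deriv b K x +
     (dir_deriv b (dir_deriv d H) x * dir_deriv c K x + dir_deriv d H x * dir_deriv b (dir_deriv c K) x) +
     (dir_deriv b (dir_deriv c H) x * dir_deriv d K x + dir_deriv c H x * dir_deriv b (dir_deriv d K) x +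
     (dir_deriv b H x * dir_deriv c (dir_deriv d K) x + H x * dir_deriv b (dir_deriv c (dir_deriv d K)) x)))"
    by (simp add: ddf_mult ddf_add S)
  have X: "dir_derivs [a, b, c, d] (\<lambda>x. H x * K x) 0 = dir_deriv a (dir_derivs [b, c, d] (\<lambda>x. H x * K x)) 0"
    by simp
  show ?thesis unfolding X e3 by (simp add: dd_add dd_mult S H0 K0 algebra_simps)
qed

end


interpretation sl: smalgU "B2 a" for a :: "'n::finite \<Rightarrow> 'n \<Rightarrow> real"
  by unfold_locales (simp_all add: closed_B2)

abbreviation ee :: "'n::finite \<Rightarrow> real^'n" where "ee k \<equiv> axis k 1"

definition Pm :: "('n::finite \<Rightarrow> 'n \<Rightarrow> real) \<Rightarrow> 'n \<Rightarrow> 'n \<Rightarrow> real^'n \<Rightarrow> real" where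
  "Pm a i j = (\<lambda>y. fd a i y * fd a j y)"
definition GMe :: "('n::finite \<Rightarrow> 'n \<Rightarrow> real) \<Rightarrow> 'n \<Rightarrow> 'n \<Rightarrow> real^'n \<Rightarrow> real" where
  "GMe a i j = (\<lambda>y. GMx a y $ i $ j)"
definition Gi :: "('n::finite \<Rightarrow> 'n \<Rightarrow> real) \<Rightarrow> 'n \<Rightarrow> 'n \<Rightarrow> real^'n \<Rightarrow> real" where
  "Gi a i j = (\<lambda>y. matrix_inv (GMx a y) $ i $ j)"
definition g0 :: "('n::finite \<Rightarrow> 'n \<Rightarrow> real) \<Rightarrow> real \<Rightarrow> real^'n \<Rightarrow> real^'n^'n" where
  "g0 a = (\<lambda>t y. GMx a y)"
definition Qf :: "('n::finite \<Rightarrow> 'n \<Rightarrow> real) \<Rightarrow> 'n \<Rightarrow> 'n \<Rightarrow> 'n \<Rightarrow> real^'n \<Rightarrow> real" where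
  "Qf a j k l = (\<lambda>y. dir_deriv (ee j) (GMe a k l) y + dir_deriv (ee k) (GMe a j l) y - dir_deriv (ee l) (GMe a j k) y)"
definition Gam :: "('n::finite \<Rightarrow> 'n \<Rightarrow> real) \<Rightarrow> 'n \<Rightarrow> 'n \<Rightarrow> 'n \<Rightarrow> real^'n \<Rightarrow> real" where
  "Gam a j k m = (\<lambda>y. Christoffel (g0 a) 0 y j k m)"
definition Ric0 :: "('n::finite \<Rightarrow> 'n \<Rightarrow> real) \<Rightarrow> 'n \<Rightarrow> 'n \<Rightarrow> real^'n \<Rightarrow> real" where
  "Ric0 a k l = (\<lambda>y. Ric (g0 a) 0 y k l)"
definition Fc :: "('n::finite \<Rightarrow> 'n \<Rightarrow> real) \<Rightarrow> 'n \<Rightarrow> 'n \<Rightarrow> 'n \<Rightarrow> real" where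
  "Fc a k p q = 2 * (a k q * (if p = q then 1 else 0) + a p k * (if q = k then 1 else 0) + a q k * (if p = k then 1 else 0))"

lemma fd_Sm[intro]: "fd a k \<in> sl.Sm a"
  by (rule sl.Sm_polys) (rule polys_mono[OF fd_polys], simp add: B2_def subset_insertI)

lemma Pm_Sm[intro]: "Pm a i j \<in> sl.Sm a"
  unfolding Pm_def by (intro sl.Sm_mult fd_Sm)

lemma GMe_Sm[intro]: "GMe a i j \<in> sl.Sm a"
  unfolding GMe_def by (rule sl.Sm_polys) (rule polys_mono[OF GMx_polys], simp add: B2_def subset_insertI)

lemma Gi_Sm[intro]: "Gi a i j \<in> sl.Sm a"
  unfolding Gi_def
proof (rule sl.inv_Sm)
  show "(\<lambda>z. GMx a z $ p $ q) \<in> sl.Sm a" for p q using GMe_Sm[of a p q] by (simp add: GMe_def)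
  show "(\<lambda>z. 1 / det (GMx a z)) \<in> sl.Sm a" by (rule sl.Sm_base) (simp add: B2_def)
  show "det (GMx a z) \<noteq> 0" for z by (rule det_GMx_nz)
qed

lemma Qf_Sm[intro]: "Qf a j k l \<in> sl.Sm a"
  unfolding Qf_def by (intro sl.Sm_add sl.Sm_diff sl.Sm_dd GMe_Sm)

lemma Gam_eq: "Gam a j k m = (\<lambda>y. 1 / 2 * (\<Sum>l\<in>UNIV. Gi a m l y * Qf a j k l y))"
  by (simp add: Gam_def Christoffel_def g0_def Gi_def Qf_def GMe_def pdx_dd fun_eq_iff)

lemma Gam_Sm[intro]: "Gam a j k m \<in> sl.Sm a"
  unfolding Gam_eq by (intro sl.Sm_cmult sl.Sm_sum sl.Sm_mult Gi_Sm Qf_Sm) simp_all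

lemma Ric0_eq: "Ric0 a k l = (\<lambda>y. \<Sum>i\<in>UNIV. dir_deriv (ee i) (Gam a k l i) y - dir_deriv (ee k) (Gam a i l i) y
   + (\<Sum>p\<in>UNIV. Gam a k l p y * Gam a i p i y - Gam a i l p y * Gam a k p i y))"
  by (simp add: Ric0_def Ric_def Riem31_def Gam_def pdx_dd fun_eq_iff)

lemma Ric0_Sm[intro]: "Ric0 a k l \<in> sl.Sm a"
  unfolding Ric0_eq
  by (intro sl.Sm_sum sl.Sm_add sl.Sm_diff sl.Sm_mult sl.Sm_dd Gam_Sm) simp_all

lemma fd_0[simp]: "fd a k 0 = 0"
  by (simp add: fd_def)

lemma dd_fd_0: "dir_deriv v (fd a k) 0 = 0"
proof (rule dd_line)
  have "((\<lambda>s. (\<Sum>q\<in>UNIV. a k q * (s * v $ q)\<^sup>2) + 2 * (s * v $ k) * (\<Sum>r\<in>UNIV. a r k * (s * v $ r)))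
     has_real_derivative 0) (at 0)"
    by (auto intro!: derivative_eq_intros)
  then show "((\<lambda>s. fd a k (0 + s *\<^sub>R v)) has_real_derivative 0) (at 0)"
    by (simp add: fd_def)
qed

lemma fd_ordv: "sl.ordv (fd a k) 2"
  unfolding sl.ordv_def
proof (intro allI impI)
  fix vs :: "(real^'a) list" assume "length vs < 2"
  then have "vs = [] \<or> (\<exists>v. vs = [v])"
    by (cases vs) auto
  then show "dir_derivs vs (fd a k) 0 = 0" using dd_fd_0 by auto
qed

definition fd1 :: "('n::finite \<Rightarrow> 'n \<Rightarrow> real) \<Rightarrow> 'n \<Rightarrow> real^'n \<Rightarrow> real^'n \<Rightarrow> real" where
  "fd1 a k v y = (\<Sum>q\<in>UNIV. a k q * (2 * y $ q * v $ q)) + 2 * v $ k * (\<Sum>r\<in>UNIV. a r k * y $ r)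
     + 2 * y $ k * (\<Sum>r\<in>UNIV. a r k * v $ r)"

lemma dd_fd: "dir_deriv v (fd a k) y = fd1 a k v y"
proof (rule dd_line)
  have "((\<lambda>s. (\<Sum>q\<in>UNIV. a k q * (y $ q + s * v $ q)\<^sup>2) + 2 * (y $ k + s * v $ k) * (\<Sum>r\<in>UNIV. a r k * (y $ r + s * v $ r)))
     has_real_derivative
      (\<Sum>q\<in>UNIV. a k q * (2 * (y $ q + 0 * v $ q) * v $ q)) + (2 * v $ k * (\<Sum>r\<in>UNIV. a r k * (y $ r + 0 * v $ r))
     + 2 * (y $ k + 0 * v $ k) * (\<Sum>r\<in>UNIV. a r k * v $ r))) (at 0)"
    by (auto intro!: derivative_eq_intros simp: algebra_simps)
  then show "((\<lambda>s. fd a k (y + s *\<^sub>R v)) has_real_derivative fd1 a k v y) (at 0)"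
    by (simp add: fd_def fd1_def algebra_simps)
qed

lemma dd_fd1: "dir_deriv w (fd1 a k v) y = (\<Sum>q\<in>UNIV. a k q * (2 * w $ q * v $ q)) + 2 * v $ k * (\<Sum>r\<in>UNIV. a r k * w $ r)
     + 2 * w $ k * (\<Sum>r\<in>UNIV. a r k * v $ r)"
proof (rule dd_line)
  have "((\<lambda>s. (\<Sum>q\<in>UNIV. a k q * (2 * (y $ q + s * w $ q) * v $ q)) + 2 * v $ k * (\<Sum>r\<in>UNIV. a r k * (y $ r + s * w $ r))
     + 2 * (y $ k + s * w $ k) * (\<Sum>r\<in>UNIV. a r k * v $ r))
     has_real_derivative
      (\<Sum>q\<in>UNIV. a k q * (2 * w $ q * v $ q)) + 2 * v $ k * (\<Sum>r\<in>UNIV. a r k * w $ r)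
     + 2 * w $ k * (\<Sum>r\<in>UNIV. a r k * v $ r)) (at 0)"
    by (auto intro!: derivative_eq_intros simp: algebra_simps)
  then show "((\<lambda>s. fd1 a k v (y + s *\<^sub>R w)) has_real_derivative
      (\<Sum>q\<in>UNIV. a k q * (2 * w $ q * v $ q)) + 2 * v $ k * (\<Sum>r\<in>UNIV. a r k * w $ r)
     + 2 * w $ k * (\<Sum>r\<in>UNIV. a r k * v $ r)) (at 0)"
    by (simp add: fd1_def algebra_simps)
qed

lemma sum_ind: "(\<Sum>r\<in>UNIV. f r * (if r = p then 1 else 0)) = (f (p::'a::finite) :: real)"
proof -
  have "(\<Sum>r\<in>UNIV. f r * (if r = p then 1 else 0)) = (\<Sum>r\<in>UNIV. if r = p then f r else 0)"
    by (rule sum.cong) auto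
  also have "\<dots> = f p" by (simp add: sum.delta')
  finally show ?thesis .
qed

lemma Fc_eq: "dir_derivs [ee p, ee q] (fd a k) 0 = Fc a k p q"
proof -
  have "dir_derivs [ee p, ee q] (fd a k) 0 = dir_deriv (ee p) (fd1 a k (ee q)) 0"
    by (simp add: dd_fd[abs_def] fd1_def[abs_def])
  also have "\<dots> = Fc a k p q"
  proof -
    have 1: "(\<Sum>x\<in>UNIV. a k x * (2 * ee p $ x * ee q $ x)) = (2 * a k p * (if p = q then 1 else 0))"
    proof -
      have "(\<Sum>x\<in>UNIV. a k x * (2 * ee p $ x * ee q $ x)) =
          (\<Sum>x\<in>UNIV. (2 * a k x * (if x = q then 1 else 0)) * (if x = p then 1 else 0))"
        by (rule sum.cong) (auto simp: axis_nth1)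
      then show ?thesis by (simp add: sum_ind)
    qed
    have 2: "(\<Sum>r\<in>UNIV. a r k * ee p $ r) = a p k" for p
      unfolding axis_nth1 by (rule sum_ind)
    show ?thesis unfolding dd_fd1 1 2 by (cases "p = q") (auto simp: Fc_def axis_nth1)
  qed
  finally show ?thesis .
qed

lemma Pm_ordv: "sl.ordv (Pm a i j) 4"
proof -
  have "sl.ordv (\<lambda>x. fd a i x * fd a j x) (2 + 2)"
    by (rule sl.ordv_mult[OF fd_Sm fd_Sm fd_ordv fd_ordv])
  then show ?thesis by (simp add: Pm_def)
qed

lemma GMe_Pm: "GMe a i j = (\<lambda>y. (if i = j then 1 else 0) + Pm a i j y)"
  by (simp add: GMe_def GMx_def Pm_def fun_eq_iff)

lemma dd_GMe: "dir_deriv v (GMe a i j) = dir_deriv v (Pm a i j)"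
  unfolding GMe_Pm sl.ddf_add[where a=a, OF sl.Sm_const Pm_Sm] sl.ddf_const by simp

lemma Qf_Pm: "Qf a j k l = (\<lambda>y. dir_deriv (ee j) (Pm a k l) y + dir_deriv (ee k) (Pm a j l) y - dir_deriv (ee l) (Pm a j k) y)"
  unfolding Qf_def dd_GMe ..

lemma dPm_Sm[intro]: "dir_deriv v (Pm a i j) \<in> sl.Sm a"
  by (intro sl.Sm_dd Pm_Sm)

lemma Qf_ordv: "sl.ordv (Qf a j k l) 3"
proof -
  have o: "sl.ordv (dir_deriv v (Pm a i j)) 3" for v i j
    using sl.ordv_dd[OF Pm_ordv[of a i j], where v=v] by simp
  show ?thesis unfolding Qf_Pm
    by (intro sl.ordv_add[where a=a] sl.ordv_diff[where a=a] sl.Sm_add dPm_Sm o)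
qed

definition Em :: "('n::finite \<Rightarrow> 'n \<Rightarrow> real) \<Rightarrow> 'n \<Rightarrow> 'n \<Rightarrow> real^'n \<Rightarrow> real" where
  "Em a m l = (\<lambda>y. Gi a m l y - (if m = l then 1 else 0))"

lemma Em_Sm[intro]: "Em a m l \<in> sl.Sm a"
  unfolding Em_def by (intro sl.Sm_diff Gi_Sm sl.Sm_const)

lemma Gi_GMx: "(\<Sum>j\<in>UNIV. Gi a m j y * GMx a y $ j $ l) = (if m = l then 1 else 0)"
proof -
  have "matrix_inv (GMx a y) ** GMx a y = mat 1" using inv_props[OF det_GMx_nz] by blast
  then have "(matrix_inv (GMx a y) ** GMx a y) $ m $ l = mat 1 $ m $ l" by simp
  then show ?thesis by (simp add: matrix_matrix_mult_def Gi_def mat_def)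
qed

lemma Em_eq: "Em a m l = (\<lambda>y. - (\<Sum>j\<in>UNIV. Gi a m j y * Pm a j l y))"
proof (rule ext)
  fix y
  have "(\<Sum>j\<in>UNIV. Gi a m j y * GMx a y $ j $ l) =
      (\<Sum>j\<in>UNIV. Gi a m j y * (if j = l then 1 else 0)) + (\<Sum>j\<in>UNIV. Gi a m j y * Pm a j l y)"
    by (simp add: GMx_def Pm_def sum.distrib algebra_simps)
  then have "(if m = l then 1 else 0) = Gi a m l y + (\<Sum>j\<in>UNIV. Gi a m j y * Pm a j l y)"
    unfolding Gi_GMx sum_ind .
  then show "Em a m l y = - (\<Sum>j\<in>UNIV. Gi a m j y * Pm a j l y)"
    by (simp add: Em_def)
qed

lemma Em_ordv: "sl.ordv (Em a m l) 4"
proof -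
  have "sl.ordv (\<lambda>y. Gi a m j y * Pm a j l y) (0 + 4)" for j
    by (rule sl.ordv_mult[OF Gi_Sm Pm_Sm sl.ordv_0 Pm_ordv])
  then have "sl.ordv (\<lambda>y. (- 1) * (\<Sum>j\<in>UNIV. Gi a m j y * Pm a j l y)) 4"
    by (intro sl.ordv_cmult[where a=a] sl.Sm_sum sl.ordv_sum[where a=a] sl.Sm_mult Gi_Sm Pm_Sm) auto
  then show ?thesis unfolding Em_eq by simp
qed

definition Rg :: "('n::finite \<Rightarrow> 'n \<Rightarrow> real) \<Rightarrow> 'n \<Rightarrow> 'n \<Rightarrow> 'n \<Rightarrow> real^'n \<Rightarrow> real" where
  "Rg a j k m = (\<lambda>y. 1 / 2 * (\<Sum>l\<in>UNIV. Em a m l y * Qf a j k l y))"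

lemma Rg_Sm[intro]: "Rg a j k m \<in> sl.Sm a"
  unfolding Rg_def by (intro sl.Sm_cmult sl.Sm_sum sl.Sm_mult Em_Sm Qf_Sm) simp_all

lemma Rg_ordv: "sl.ordv (Rg a j k m) 7"
proof -
  have "sl.ordv (\<lambda>y. Em a m l y * Qf a j k l y) 7" for l
    using sl.ordv_mult[OF Em_Sm Qf_Sm Em_ordv[of a m l] Qf_ordv[of a j k l]] by simp
  then show ?thesis unfolding Rg_def
    by (intro sl.ordv_cmult[where a=a] sl.Sm_sum sl.ordv_sum[where a=a] sl.Sm_mult Em_Sm Qf_Sm) auto
qed

lemma Gam_split: "Gam a j k m = (\<lambda>y. 1 / 2 * Qf a j k m y + Rg a j k m y)"
proof (rule ext)
  fix y
  have "(\<Sum>l\<in>UNIV. Gi a m l y * Qf a j k l y) =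
     (\<Sum>l\<in>UNIV. Qf a j k l y * (if l = m then 1 else 0) + Em a m l y * Qf a j k l y)"
    by (rule sum.cong) (auto simp: Em_def algebra_simps)
  also have "\<dots> = (\<Sum>l\<in>UNIV. Qf a j k l y * (if l = m then 1 else 0)) + (\<Sum>l\<in>UNIV. Em a m l y * Qf a j k l y)"
    by (rule sum.distrib)
  finally have "(\<Sum>l\<in>UNIV. Gi a m l y * Qf a j k l y) =
     (\<Sum>l\<in>UNIV. Qf a j k l y * (if l = m then 1 else 0)) + (\<Sum>l\<in>UNIV. Em a m l y * Qf a j k l y)" .
  then show "Gam a j k m y = 1 / 2 * Qf a j k m y + Rg a j k m y"
    unfolding Gam_eq Rg_def sum_ind by (simp add: algebra_simps)
qed

lemma Gam_ordv: "sl.ordv (Gam a j k m) 3"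
proof -
  have "sl.ordv (\<lambda>y. Gi a m l y * Qf a j k l y) (0 + 3)" for l
    by (rule sl.ordv_mult[OF Gi_Sm Qf_Sm sl.ordv_0 Qf_ordv])
  then show ?thesis unfolding Gam_eq
    by (intro sl.ordv_cmult[where a=a] sl.Sm_sum sl.ordv_sum[where a=a] sl.Sm_mult Gi_Sm Qf_Sm) auto
qed

definition L4v :: "('n::finite \<Rightarrow> 'n \<Rightarrow> real) \<Rightarrow> 'n \<Rightarrow> 'n \<Rightarrow> 'n \<Rightarrow> 'n \<Rightarrow> 'n \<Rightarrow> 'n \<Rightarrow> real" where
  "L4v a k m p1 p2 p3 p4 = Fc a k p3 p4 * Fc a m p1 p2 + Fc a k p2 p4 * Fc a m p1 p3 + Fc a k p1 p4 * Fc a m p2 p3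
     + Fc a k p2 p3 * Fc a m p1 p4 + Fc a k p1 p3 * Fc a m p2 p4 + Fc a k p1 p2 * Fc a m p3 p4"

lemma L4Pm: "dir_derivs [ee p1, ee p2, ee p3, ee p4] (Pm a k m) 0 = L4v a k m p1 p2 p3 p4"
  unfolding Pm_def sl.L4[OF fd_Sm fd_ordv fd_Sm fd_ordv] Fc_eq L4v_def ..

definition Q3v :: "('n::finite \<Rightarrow> 'n \<Rightarrow> real) \<Rightarrow> 'n \<Rightarrow> 'n \<Rightarrow> 'n \<Rightarrow> 'n \<Rightarrow> 'n \<Rightarrow> 'n \<Rightarrow> real" where
  "Q3v a p1 p2 p3 j k m = L4v a k m p1 p2 p3 j + L4v a j m p1 p2 p3 k - L4v a j k p1 p2 p3 m"

lemma Q3: "dir_derivs [ee p1, ee p2, ee p3] (Qf a j k m) 0 = Q3v a p1 p2 p3 j k m"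
proof -
  have "dir_derivs [ee p1, ee p2, ee p3] (Qf a j k m) =
     (\<lambda>y. dir_derivs [ee p1, ee p2, ee p3] (\<lambda>y. dir_deriv (ee j) (Pm a k m) y + dir_deriv (ee k) (Pm a j m) y) y
        - dir_derivs [ee p1, ee p2, ee p3] (dir_deriv (ee m) (Pm a j k)) y)"
    unfolding Qf_Pm by (rule sl.dds_diff[where a=a]) auto
  also have "\<dots> = (\<lambda>y. dir_derivs [ee p1, ee p2, ee p3] (dir_deriv (ee j) (Pm a k m)) y
        + dir_derivs [ee p1, ee p2, ee p3] (dir_deriv (ee k) (Pm a j m)) y
        - dir_derivs [ee p1, ee p2, ee p3] (dir_deriv (ee m) (Pm a j k)) y)"
    by (subst sl.dds_add[where a=a]) auto
  finally have "dir_derivs [ee p1, ee p2, ee p3] (Qf a j k m) 0 =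
      dir_derivs [ee p1, ee p2, ee p3, ee j] (Pm a k m) 0 + dir_derivs [ee p1, ee p2, ee p3, ee k] (Pm a j m) 0
      - dir_derivs [ee p1, ee p2, ee p3, ee m] (Pm a j k) 0"
    by simp
  then show ?thesis unfolding L4Pm Q3v_def .
qed

lemma d3Gam: "dir_derivs [ee p1, ee p2, ee p3] (Gam a j k m) 0 = 1 / 2 * Q3v a p1 p2 p3 j k m"
proof -
  have "dir_derivs [ee p1, ee p2, ee p3] (Gam a j k m) =
     (\<lambda>y. dir_derivs [ee p1, ee p2, ee p3] (\<lambda>y. 1 / 2 * Qf a j k m y) y + dir_derivs [ee p1, ee p2, ee p3] (Rg a j k m) y)"
    unfolding Gam_split by (rule sl.dds_add[where a=a, OF sl.Sm_cmult[OF Qf_Sm] Rg_Sm])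
  also have "\<dots> = (\<lambda>y. 1 / 2 * dir_derivs [ee p1, ee p2, ee p3] (Qf a j k m) y + dir_derivs [ee p1, ee p2, ee p3] (Rg a j k m) y)"
    by (subst sl.dds_cmult[where a=a]) auto
  finally have "dir_derivs [ee p1, ee p2, ee p3] (Gam a j k m) 0 =
      1 / 2 * dir_derivs [ee p1, ee p2, ee p3] (Qf a j k m) 0 + dir_derivs [ee p1, ee p2, ee p3] (Rg a j k m) 0"
    by simp
  moreover have "dir_derivs [ee p1, ee p2, ee p3] (Rg a j k m) 0 = 0"
    by (rule sl.ordvD[OF Rg_ordv]) simp
  ultimately show ?thesis unfolding Q3 by simp
qed

definition Ric2v :: "('n::finite \<Rightarrow> 'n \<Rightarrow> real) \<Rightarrow> 'n \<Rightarrow> 'n \<Rightarrow> 'n \<Rightarrow> 'n \<Rightarrow> real" where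
  "Ric2v a k l p1 p2 = (\<Sum>i\<in>UNIV. 1 / 2 * Q3v a p1 p2 i k l i - 1 / 2 * Q3v a p1 p2 k i l i)"

lemma Ric2: "dir_derivs [ee p1, ee p2] (Ric0 a k l) 0 = Ric2v a k l p1 p2"
proof -
  define T1 where "T1 i = dir_deriv (ee i) (Gam a k l i)" for i
  define T2 where "T2 i = dir_deriv (ee k) (Gam a i l i)" for i
  define T3 where "T3 i = (\<lambda>y. \<Sum>p\<in>UNIV. Gam a k l p y * Gam a i p i y - Gam a i l p y * Gam a k p i y)" for i
  have S1: "T1 i \<in> sl.Sm a" "T2 i \<in> sl.Sm a" for i unfolding T1_def T2_def by auto
  have S3: "T3 i \<in> sl.Sm a" for i unfolding T3_def by (intro sl.Sm_sum sl.Sm_diff sl.Sm_mult Gam_Sm) auto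
  have o6: "sl.ordv (T3 i) 6" for i
  proof -
    have "sl.ordv (\<lambda>y. Gam a k l p y * Gam a i p i y) (3 + 3)" "sl.ordv (\<lambda>y. Gam a i l p y * Gam a k p i y) (3 + 3)" for p
      by (rule sl.ordv_mult[OF Gam_Sm Gam_Sm Gam_ordv Gam_ordv])+
    then show ?thesis unfolding T3_def
      by (intro sl.ordv_sum[where a=a] sl.ordv_diff[where a=a] sl.Sm_diff sl.Sm_mult Gam_Sm) auto
  qed
  have R: "Ric0 a k l = (\<lambda>y. \<Sum>i\<in>UNIV. T1 i y - T2 i y + T3 i y)"
    unfolding Ric0_eq T1_def T2_def T3_def ..
  have "dir_derivs [ee p1, ee p2] (Ric0 a k l) = (\<lambda>y. \<Sum>i\<in>UNIV. dir_derivs [ee p1, ee p2] (\<lambda>y. T1 i y - T2 i y + T3 i y) y)"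
    unfolding R by (rule sl.dds_sum[where a=a]) (simp, intro sl.Sm_add sl.Sm_diff S1 S3)
  also have "\<dots> = (\<lambda>y. \<Sum>i\<in>UNIV. dir_derivs [ee p1, ee p2] (T1 i) y - dir_derivs [ee p1, ee p2] (T2 i) y
       + dir_derivs [ee p1, ee p2] (T3 i) y)"
  proof -
    have e: "dir_derivs vs (\<lambda>y. T1 i y - T2 i y + T3 i y) = (\<lambda>y. dir_derivs vs (T1 i) y - dir_derivs vs (T2 i) y + dir_derivs vs (T3 i) y)" for vs i
      unfolding sl.dds_add[where a=a, OF sl.Sm_diff[OF S1] S3] sl.dds_diff[where a=a, OF S1] ..
    show ?thesis unfolding e ..
  qed
  finally have "dir_derivs [ee p1, ee p2] (Ric0 a k l) 0 = (\<Sum>i\<in>UNIV. dir_derivs [ee p1, ee p2] (T1 i) 0 - dir_derivs [ee p1, ee p2] (T2 i) 0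
       + dir_derivs [ee p1, ee p2] (T3 i) 0)" by simp
  also have "\<dots> = (\<Sum>i\<in>UNIV. dir_derivs [ee p1, ee p2, ee i] (Gam a k l i) 0 - dir_derivs [ee p1, ee p2, ee k] (Gam a i l i) 0)"
    using sl.ordvD[OF o6, of "[ee p1, ee p2]"] by (simp add: T1_def T2_def)
  also have "\<dots> = Ric2v a k l p1 p2"
    unfolding d3Gam Ric2v_def ..
  finally show ?thesis .
qed

lemma Fc_sym1: "Fc a k p q = Fc a k q p"
  by (auto simp: Fc_def)

lemma Fc_sym2: "Fc a k p q = Fc a p k q"
  by (auto simp: Fc_def)

lemma R2x: "1 / 2 * Q3v a p q x k l x - 1 / 2 * Q3v a p q k x l x =
   Fc a k l p * Fc a q x x + Fc a k l q * Fc a p x x - Fc a k p x * Fc a l q x - Fc a k q x * Fc a l p x"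
  unfolding Q3v_def L4v_def
  apply (simp only: Fc_sym1[of a] Fc_sym2[of a] mult.commute)
  apply (simp only: ring_distribs)
  done

definition DRv :: "('n::finite \<Rightarrow> 'n \<Rightarrow> real) \<Rightarrow> 'n \<Rightarrow> 'n \<Rightarrow> 'n \<Rightarrow> 'n \<Rightarrow> real" where
  "DRv a i j k l = - (Ric2v a j l i k - Ric2v a j k i l - Ric2v a i l j k + Ric2v a i k j l)"

lemma DRv_eq: "DRv a i j k l = 2 * (\<Sum>x\<in>UNIV. Fc a j k x * Fc a i l x - Fc a i k x * Fc a j l x)"
proof -
  have "DRv a i j k l = (\<Sum>x\<in>UNIV. - (
      (Fc a j l i * Fc a k x x + Fc a j l k * Fc a i x x - Fc a j i x * Fc a l k x - Fc a j k x * Fc a l i x)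
    - (Fc a j k i * Fc a l x x + Fc a j k l * Fc a i x x - Fc a j i x * Fc a k l x - Fc a j l x * Fc a k i x)
    - (Fc a i l j * Fc a k x x + Fc a i l k * Fc a j x x - Fc a i j x * Fc a l k x - Fc a i k x * Fc a l j x)
    + (Fc a i k j * Fc a l x x + Fc a i k l * Fc a j x x - Fc a i j x * Fc a k l x - Fc a i l x * Fc a k j x)))"
    unfolding DRv_def Ric2v_def R2x sum_subtractf[symmetric] sum.distrib[symmetric] sum_negf ..
  also have "\<dots> = (\<Sum>x\<in>UNIV. 2 * (Fc a j k x * Fc a i l x - Fc a i k x * Fc a j l x))"
  proof (rule sum.cong[OF refl])
    fix x
    show "- ((Fc a j l i * Fc a k x x + Fc a j l k * Fc a i x x - Fc a j i x * Fc a l k x - Fc a j k x * Fc a l i x)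
    - (Fc a j k i * Fc a l x x + Fc a j k l * Fc a i x x - Fc a j i x * Fc a k l x - Fc a j l x * Fc a k i x)
    - (Fc a i l j * Fc a k x x + Fc a i l k * Fc a j x x - Fc a i j x * Fc a l k x - Fc a i k x * Fc a l j x)
    + (Fc a i k j * Fc a l x x + Fc a i k l * Fc a j x x - Fc a i j x * Fc a k l x - Fc a i l x * Fc a k j x))
      = 2 * (Fc a j k x * Fc a i l x - Fc a i k x * Fc a j l x)"
      apply (simp only: Fc_sym1[of a] Fc_sym2[of a] mult.commute)
      apply (simp only: ring_distribs)
      done
  qed
  finally show ?thesis by (simp add: sum_distrib_left)
qed

lemma GMx_0: "GMx a 0 = mat 1"
  by (simp add: GMx_def mat_def vec_eq_iff)

lemma dGMe_0: "dir_deriv v (GMe a k l) 0 = 0"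
  unfolding dd_GMe using sl.ordvD[OF Pm_ordv, of "[v]"] by simp

lemma ddGMe_0: "dir_deriv u (dir_deriv v (GMe a k l)) 0 = 0"
  unfolding dd_GMe using sl.ordvD[OF Pm_ordv, of "[u, v]"] by simp

lemma Gi_Em: "Gi a m l = (\<lambda>y. (if m = l then 1 else 0) + Em a m l y)"
  by (simp add: Em_def fun_eq_iff)

lemma Gi_0: "Gi a m l 0 = (if m = l then 1 else 0)"
  using sl.ordvD[OF Em_ordv, of "[]"] by (simp add: Gi_Em)

lemma dGi_0: "dir_deriv v (Gi a m l) 0 = 0"
  unfolding Gi_Em sl.ddf_add[where a=a, OF sl.Sm_const Em_Sm] sl.ddf_const
  using sl.ordvD[OF Em_ordv, of "[v]"] by simp

lemma Gam_0: "Gam a j k m 0 = 0"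
  using sl.ordvD[OF Gam_ordv, of "[]"] by simp

lemma dGam_0: "dir_deriv v (Gam a j k m) 0 = 0"
  using sl.ordvD[OF Gam_ordv, of "[v]"] by simp

lemma Riem31_g0_0: "Riem31 (g0 a) 0 0 i j k m = 0"
proof -
  have c: "Christoffel (g0 a) 0 0 j k m = 0" for j k m using Gam_0[of a j k m] by (simp add: Gam_def)
  show ?thesis by (simp add: Riem31_def Gam_def[symmetric] pdx_dd c dGam_0)
qed


lemma dd_slice: "dir_deriv (0, w) H (t, y) = dir_deriv w (\<lambda>y. H (t, y)) y"
  by (simp add: dir_deriv_def)

lemma dd_time: "dir_deriv (1, 0) H (t, y) = deriv (\<lambda>s. H (t + s, y)) 0"
  by (simp add: dir_deriv_def)

lemma sum_ind2: "(\<Sum>r\<in>UNIV. (if p = r then 1 else 0) * f r) = (f (p::'a::finite) :: real)"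
proof -
  have "(\<Sum>r\<in>UNIV. (if p = r then 1 else 0) * f r) = (\<Sum>r\<in>UNIV. if p = r then f r else 0)"
    by (rule sum.cong) auto
  also have "\<dots> = f p" by (simp add: sum.delta)
  finally show ?thesis .
qed

lemma deriv_within_unique:
  fixes f :: "real \<Rightarrow> real"
  assumes "(f has_real_derivative D) (at 0)" "(f has_real_derivative E) (at 0 within {0..<T})" "T > 0"
  shows "D = E"
proof -
  have nt: "\<not> trivial_limit (at (0::real) within {0..<T})"
  proof -
    have "(0::real) islimpt {0<..<T}" using assms(3) by (rule islimpt_greaterThanLessThan1)
    then have "(0::real) islimpt {0..<T}" by (rule islimpt_subset) auto
    then show ?thesis by (simp add: trivial_limit_within)
  qed
  have "(f has_real_derivative D) (at 0 within {0..<T})"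
    using assms(1) by (rule has_field_derivative_at_within)
  then have "((\<lambda>y. (f y - f 0) / (y - 0)) \<longlongrightarrow> D) (at 0 within {0..<T})"
    "((\<lambda>y. (f y - f 0) / (y - 0)) \<longlongrightarrow> E) (at 0 within {0..<T})"
    using assms(2) by (simp_all add: has_field_derivative_iff)
  then show ?thesis using tendsto_unique[OF nt] by blast
qed

locale RF =
  fixes a :: "'n::{finite,linorder} \<Rightarrow> 'n \<Rightarrow> real"
    and g :: "real \<Rightarrow> (real, 'n) vec \<Rightarrow> ((real, 'n) vec, 'n) vec"
    and U :: "(real, 'n) vec set" and S :: "(real \<times> (real, 'n) vec) set" and T :: real
  assumes T: "T > 0"
    and U: "open U" "0 \<in> U"
    and S: "open S" "{0..<T} \<times> U \<subseteq> S"
    and smooth: "\<And>i j. smooth_fun_on S (\<lambda>(t, x). g t x $ i $ j)"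
    and ricci_flow: "\<And>t x i j. t \<in> {0..<T} \<Longrightarrow> x \<in> U \<Longrightarrow>
        ((\<lambda>s. g s x $ i $ j) has_real_derivative (- 2 * Ric g t x i j)) (at t within {0..<T})"
    and init: "\<And>x. x \<in> U \<Longrightarrow> g 0 x = graph_metric (cubic_f a) x"
begin

definition F where
  "F i j = (\<lambda>(t, x). g t x $ i $ j)"

lemma F_apply: "F i j (t, x) = g t x $ i $ j"
  by (simp add: F_def)

definition B1a where
  "B1a = {dir_derivs vs (F i j) | vs i j. True}"

lemma closed_B1a:
  assumes "S' \<subseteq> S"
  shows "closed_base B1a S'"
  unfolding closed_base_def
proof (intro ballI conjI allI)
  fix b v assume "b \<in> B1a"
  then obtain vs i j where b: "b = dir_derivs vs (F i j)" unfolding B1a_def by blast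
  have sm: "smooth_fun_on S (F i j)" using smooth unfolding F_def .
  show "continuous_on S' b"
    using sm assms unfolding smooth_fun_on_def b by (meson continuous_on_subset)
  have "\<forall>z\<in>S'. ((\<lambda>s. b (z + s *\<^sub>R v)) has_real_derivative dir_derivs (v # vs) (F i j) z) (at 0)"
  proof
    fix z assume "z \<in> S'"
    then have "z \<in> S" using assms by blast
    then have "(\<lambda>s. dir_derivs vs (F i j) (z + s *\<^sub>R v)) differentiable at 0"
      using sm unfolding smooth_fun_on_def by blast
    then show "((\<lambda>s. b (z + s *\<^sub>R v)) has_real_derivative dir_derivs (v # vs) (F i j) z) (at 0)"
      unfolding b by (simp add: dir_deriv_def DERIV_deriv_iff_real_differentiable)
  qed
  moreover have "dir_derivs (v # vs) (F i j) \<in> polys B1a"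
    by (rule polys.pbase) (unfold B1a_def, rule CollectI, rule exI[of _ "v # vs"], blast)
  ultimately show "\<exists>q\<in>polys B1a. \<forall>z\<in>S'. ((\<lambda>s. b (z + s *\<^sub>R v)) has_real_derivative q z) (at 0)"
    by blast
qed

definition G where
  "G z = g (fst z) (snd z)"

lemma G_entry_polys: "(\<lambda>z. G z $ i $ j) \<in> polys B1a"
proof -
  have "dir_derivs [] (F i j) \<in> polys B1a"
    by (rule polys.pbase) (unfold B1a_def, rule CollectI, rule exI[of _ "[]"], blast)
  then have "F i j \<in> polys B1a" by simp
  moreover have "F i j = (\<lambda>z. G z $ i $ j)" by (auto simp: F_def G_def fun_eq_iff)
  ultimately show ?thesis by simp
qed

definition S' where
  "S' = S \<inter> {z. det (G z) \<noteq> 0}"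

lemma open_S': "open S'"
proof -
  have "continuous_on S (\<lambda>z. det (G z))"
    using polys_props[OF closed_B1a det_polys[OF G_entry_polys]] by blast
  then have "open ((\<lambda>z. det (G z)) -` (- {0}) \<inter> S)"
    using S(1) continuous_on_open_vimage by blast
  moreover have "(\<lambda>z. det (G z)) -` (- {0}) \<inter> S = S'" by (auto simp: S'_def)
  ultimately show ?thesis by simp
qed

lemma S'_sub: "S' \<subseteq> S" by (auto simp: S'_def)

lemma g00: "g 0 0 = mat 1"
  using init[OF U(2)] by (simp add: graph_metric_GMx GMx_0)

lemma zero_S': "(0, 0) \<in> S'"
proof -
  have "(0, 0) \<in> S" using S(2) U(2) T by auto
  then show ?thesis by (simp add: S'_def G_def g00)
qed

definition B1 where
  "B1 = insert (\<lambda>z. 1 / det (G z)) B1a"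

lemma closed_B1: "closed_base B1 S'"
  unfolding B1_def
  by (rule closed_base_inverse[OF closed_B1a[OF S'_sub] det_polys[OF G_entry_polys]]) (simp add: S'_def)

sublocale zl: smalg S' B1
  by unfold_locales (simp_all add: open_S' closed_B1)

end

context RF
begin

lemma F_Sm[intro]: "dir_derivs vs (F i j) \<in> zl.Sm"
  by (rule zl.Sm_base) (unfold B1_def B1a_def, blast)

lemma F_Sm0[intro]: "F i j \<in> zl.Sm"
  using F_Sm[of "[]" i j] by simp

lemma dF_Sm[intro]: "dir_deriv v (F i j) \<in> zl.Sm"
  using F_Sm[of "[v]" i j] by simp

definition Gz where "Gz m l = (\<lambda>z. matrix_inv (G z) $ m $ l)"

lemma Gz_Sm[intro]: "Gz m l \<in> zl.Sm"
  unfolding Gz_def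
proof (rule zl.inv_Sm)
  show "(\<lambda>z. G z $ p $ q) \<in> zl.Sm" for p q
  proof -
    have "F p q = (\<lambda>z. G z $ p $ q)" by (auto simp: F_def G_def fun_eq_iff)
    then show ?thesis using F_Sm0[of p q] by simp
  qed
  show "(\<lambda>z. 1 / det (G z)) \<in> zl.Sm" by (rule zl.Sm_base) (simp add: B1_def)
  show "det (G z) \<noteq> 0" if "z \<in> S'" for z using that by (simp add: S'_def)
qed

definition Qz where
  "Qz j k l = (\<lambda>z. dir_deriv (0, axis j 1) (F k l) z + dir_deriv (0, axis k 1) (F j l) z - dir_deriv (0, axis l 1) (F j k) z)"

lemma Qz_Sm[intro]: "Qz j k l \<in> zl.Sm"
  unfolding Qz_def by (intro zl.Sm_add zl.Sm_diff dF_Sm)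

definition Gamz where "Gamz j k m = (\<lambda>z. 1 / 2 * (\<Sum>l\<in>UNIV. Gz m l z * Qz j k l z))"

lemma Gamz_Sm[intro]: "Gamz j k m \<in> zl.Sm"
  unfolding Gamz_def by (intro zl.Sm_cmult zl.Sm_sum zl.Sm_mult Gz_Sm Qz_Sm) simp_all

lemma pdx_F: "pdx i (\<lambda>y. g t y $ j $ l) y = dir_deriv (0, axis i 1) (F j l) (t, y)"
  by (simp add: pdx_dd dd_slice F_apply)

lemma Christoffel_z: "Christoffel g t y j k m = Gamz j k m (t, y)"
  by (simp add: Christoffel_def Gamz_def Gz_def Qz_def G_def pdx_F)

definition Rz where
  "Rz i j k m = (\<lambda>z. dir_deriv (0, axis i 1) (Gamz j k m) z - dir_deriv (0, axis j 1) (Gamz i k m) z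
     + (\<Sum>p\<in>UNIV. Gamz j k p z * Gamz i p m z - Gamz i k p z * Gamz j p m z))"

lemma Rz_Sm[intro]: "Rz i j k m \<in> zl.Sm"
  unfolding Rz_def by (intro zl.Sm_add zl.Sm_diff zl.Sm_sum zl.Sm_mult zl.Sm_dd Gamz_Sm) simp_all

lemma Riem31_z: "Riem31 g t y i j k m = Rz i j k m (t, y)"
proof -
  have "pdx i (\<lambda>y. Christoffel g t y j k m) y = dir_deriv (0, axis i 1) (Gamz j k m) (t, y)" for i j k m
    by (simp add: pdx_dd dd_slice Christoffel_z)
  then show ?thesis by (simp add: Riem31_def Rz_def Christoffel_z)
qed

definition Rmz where "Rmz i j k l = (\<lambda>z. \<Sum>m\<in>UNIV. Rz i j k m z * F m l z)"

lemma Rmz_Sm[intro]: "Rmz i j k l \<in> zl.Sm"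
  unfolding Rmz_def by (intro zl.Sm_sum zl.Sm_mult Rz_Sm F_Sm0) simp_all

lemma Rm_z: "Rm g t y i j k l = Rmz i j k l (t, y)"
  by (simp add: Rm_def Rmz_def Riem31_z F_apply)

lemma g0_U: "y \<in> U \<Longrightarrow> g 0 y = g0 a 0 y"
  by (simp add: init graph_metric_GMx g0_def)

lemma Christoffel_U: "y \<in> U \<Longrightarrow> Christoffel g 0 y j k m = Christoffel (g0 a) 0 y j k m"
proof -
  assume y: "y \<in> U"
  have "pdx i (\<lambda>y. g 0 y $ j $ l) y = pdx i (\<lambda>y. g0 a 0 y $ j $ l) y" for i j l
    unfolding pdx_dd by (rule dd_cong_open[OF U(1) y]) (simp add: g0_U)
  then show ?thesis by (simp add: Christoffel_def g0_U[OF y])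
qed

lemma Riem31_U: "y \<in> U \<Longrightarrow> Riem31 g 0 y i j k m = Riem31 (g0 a) 0 y i j k m"
proof -
  assume y: "y \<in> U"
  have "pdx i (\<lambda>y. Christoffel g 0 y j k m) y = pdx i (\<lambda>y. Christoffel (g0 a) 0 y j k m) y" for i j k m
    unfolding pdx_dd by (rule dd_cong_open[OF U(1) y]) (simp add: Christoffel_U)
  then show ?thesis by (simp add: Riem31_def Christoffel_U[OF y])
qed

lemma Ric_U: "y \<in> U \<Longrightarrow> Ric g 0 y k l = Ric0 a k l y"
  by (simp add: Ric_def Ric0_def Riem31_U)

lemma Rm_0: "Rm g 0 0 i j k l = 0"
  by (simp add: Rm_def Riem31_U[OF U(2)] Riem31_g0_0)

end

context RF
begin

lemma F_slice_U: "y \<in> U \<Longrightarrow> F k l (0, y) = GMe a k l y"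
  by (simp add: F_apply GMe_def g0_U g0_def)

lemma F00: "F m l (0, 0) = (if m = l then 1 else 0)"
  by (simp add: F_apply g00 mat_def)

lemma dF_slice_U: "y \<in> U \<Longrightarrow> dir_deriv (0, axis j 1) (F k l) (0, y) = dir_deriv (ee j) (GMe a k l) y"
  unfolding dd_slice by (rule dd_cong_open[OF U(1)]) (simp_all add: F_slice_U)

lemma dF00: "dir_deriv (0, axis j 1) (F k l) (0, 0) = 0"
  using dF_slice_U[OF U(2)] dGMe_0 by simp

lemma ddF00: "dir_deriv (0, axis i 1) (dir_deriv (0, axis j 1) (F k l)) (0, 0) = 0"
proof -
  have "dir_deriv (0, axis i 1) (dir_deriv (0, axis j 1) (F k l)) (0, 0) =
      dir_deriv (ee i) (dir_deriv (ee j) (GMe a k l)) 0"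
    unfolding dd_slice by (rule dd_cong_open[OF U(1) U(2)]) (simp add: dF_slice_U[unfolded dd_slice])
  then show ?thesis using ddGMe_0 by simp
qed

lemma Qz00: "Qz j k l (0, 0) = 0"
  by (simp add: Qz_def dF00)

lemma dQz00: "dir_deriv (0, axis i 1) (Qz j k l) (0, 0) = 0"
  unfolding Qz_def
  by (simp add: zl.dd_add zl.dd_diff dF_Sm zl.Sm_add zero_S' ddF00)

lemma Gz_slice_U: "y \<in> U \<Longrightarrow> Gz m l (0, y) = Gi a m l y"
  by (simp add: Gz_def Gi_def G_def g0_U g0_def)

lemma Gz00: "Gz m l (0, 0) = (if m = l then 1 else 0)"
  by (simp add: Gz_slice_U[OF U(2)] Gi_0)

lemma dGz00: "dir_deriv (0, axis i 1) (Gz m l) (0, 0) = 0"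
proof -
  have "dir_deriv (0, axis i 1) (Gz m l) (0, 0) = dir_deriv (ee i) (Gi a m l) 0"
    unfolding dd_slice by (rule dd_cong_open[OF U(1) U(2)]) (simp add: Gz_slice_U)
  then show ?thesis using dGi_0 by simp
qed

lemma Gamz00: "Gamz j k m (0, 0) = 0"
  by (simp add: Gamz_def Qz00)

lemma Rz00: "Rz i j k m (0, 0) = 0"
  using Riem31_z[of 0 0 i j k m] by (simp add: Riem31_U[OF U(2)] Riem31_g0_0)

lemma dtF_slice_U:
  assumes y: "y \<in> U"
  shows "dir_deriv (1, 0) (F k l) (0, y) = - 2 * Ric0 a k l y"
proof -
  have zS: "(0, y) \<in> S" using S(2) y T by auto
  have sm: "smooth_fun_on S (F k l)" using smooth unfolding F_def .
  then have "(\<lambda>s. dir_derivs [] (F k l) ((0, y) + s *\<^sub>R (1, 0))) differentiable at 0"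
    using zS unfolding smooth_fun_on_def by blast
  then have d1: "((\<lambda>s. g s y $ k $ l) has_real_derivative dir_deriv (1, 0) (F k l) (0, y)) (at 0)"
    by (simp add: dir_deriv_def DERIV_deriv_iff_real_differentiable F_apply)
  have d2: "((\<lambda>s. g s y $ k $ l) has_real_derivative (- 2 * Ric g 0 y k l)) (at 0 within {0..<T})"
    using ricci_flow[OF _ y] T by simp
  show ?thesis using deriv_within_unique[OF d1 d2 T] Ric_U[OF y] by simp
qed

lemma DDg:
  "dir_deriv (0, axis p 1) (dir_deriv (0, axis q 1) (dir_deriv (1, 0) (F x y))) (0, 0) = - 2 * Ric2v a x y p q"
proof -
  have inner: "dir_deriv (0, axis q 1) (dir_deriv (1, 0) (F x y)) (0, y') = - 2 * dir_deriv (ee q) (Ric0 a x y) y'"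
    if y': "y' \<in> U" for y'
  proof -
    have "dir_deriv (0, axis q 1) (dir_deriv (1, 0) (F x y)) (0, y') = dir_deriv (ee q) (\<lambda>y''. - 2 * Ric0 a x y y'') y'"
      unfolding dd_slice by (rule dd_cong_open[OF U(1) y']) (simp add: dtF_slice_U del: mult_minus_left)
    also have "\<dots> = - 2 * dir_deriv (ee q) (Ric0 a x y) y'"
      by (rule sl.dd_cmult) auto
    finally show ?thesis .
  qed
  have "dir_deriv (0, axis p 1) (dir_deriv (0, axis q 1) (dir_deriv (1, 0) (F x y))) (0, 0) =
      dir_deriv (ee p) (\<lambda>y'. - 2 * dir_deriv (ee q) (Ric0 a x y) y') 0"
    unfolding dd_slice by (rule dd_cong_open[OF U(1) U(2)]) (simp add: inner[unfolded dd_slice] del: mult_minus_left)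
  also have "\<dots> = - 2 * dir_deriv (ee p) (dir_deriv (ee q) (Ric0 a x y)) 0"
    by (rule sl.dd_cmult) auto
  also have "\<dots> = - 2 * Ric2v a x y p q"
    using Ric2[of p q a x y] by simp
  finally show ?thesis .
qed

end

context RF
begin

section \<open>The time derivative of the curvature at the origin\<close>

lemma dtQz: "z \<in> S' \<Longrightarrow> dir_deriv (1, 0) (Qz j k l) z =
   dir_deriv (0, axis j 1) (dir_deriv (1, 0) (F k l)) z + dir_deriv (0, axis k 1) (dir_deriv (1, 0) (F j l)) z
   - dir_deriv (0, axis l 1) (dir_deriv (1, 0) (F j k)) z"
  unfolding Qz_def
  by (simp add: zl.dd_add zl.dd_diff dF_Sm zl.Sm_add zl.clairaut[OF F_Sm0])

lemma dtGamz: "z \<in> S' \<Longrightarrow> dir_deriv (1, 0) (Gamz j k m) z =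
   1 / 2 * (\<Sum>l\<in>UNIV. dir_deriv (1, 0) (Gz m l) z * Qz j k l z + Gz m l z * dir_deriv (1, 0) (Qz j k l) z)"
proof -
  assume z: "z \<in> S'"
  have s: "(\<lambda>z. \<Sum>l\<in>UNIV. Gz m l z * Qz j k l z) \<in> zl.Sm" by (intro zl.Sm_sum zl.Sm_mult) auto
  show ?thesis unfolding Gamz_def zl.dd_cmult[OF s z]
    by (simp add: zl.dd_sum[OF _ _ z] zl.Sm_mult Gz_Sm Qz_Sm zl.dd_mult[OF _ _ z])
qed

definition DD where
  "DD p q x y = dir_deriv (0, axis p 1) (dir_deriv (0, axis q 1) (dir_deriv (1, 0) (F x y))) (0, 0)"

lemma ddtQz00: "dir_deriv (0, axis i 1) (dir_deriv (1, 0) (Qz j k l)) (0, 0) = DD i j k l + DD i k j l - DD i l j k"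
proof -
  have "dir_deriv (0, axis i 1) (dir_deriv (1, 0) (Qz j k l)) (0, 0) =
     dir_deriv (0, axis i 1) (\<lambda>z. dir_deriv (0, axis j 1) (dir_deriv (1, 0) (F k l)) z + dir_deriv (0, axis k 1) (dir_deriv (1, 0) (F j l)) z
   - dir_deriv (0, axis l 1) (dir_deriv (1, 0) (F j k)) z) (0, 0)"
    by (rule dd_cong_open[OF open_S' zero_S']) (simp add: dtQz)
  also have "\<dots> = DD i j k l + DD i k j l - DD i l j k"
    unfolding DD_def using zero_S'
    by (simp add: zl.dd_add zl.dd_diff zl.Sm_dd dF_Sm zl.Sm_add)
  finally show ?thesis .
qed

lemma Kd: "dir_deriv (1, 0) (dir_deriv (0, axis i 1) (Gamz j k m)) (0, 0) = 1 / 2 * (DD i j k m + DD i k j m - DD i m j k)"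
proof -
  have "dir_deriv (1, 0) (dir_deriv (0, axis i 1) (Gamz j k m)) (0, 0) =
      dir_deriv (0, axis i 1) (dir_deriv (1, 0) (Gamz j k m)) (0, 0)"
    by (rule zl.clairaut[OF Gamz_Sm zero_S'])
  also have "\<dots> = dir_deriv (0, axis i 1)
      (\<lambda>z. 1 / 2 * (\<Sum>l\<in>UNIV. dir_deriv (1, 0) (Gz m l) z * Qz j k l z + Gz m l z * dir_deriv (1, 0) (Qz j k l) z)) (0, 0)"
    by (rule dd_cong_open[OF open_S' zero_S']) (simp add: dtGamz)
  also have "\<dots> = 1 / 2 * (\<Sum>l\<in>UNIV.
       (dir_deriv (0, axis i 1) (dir_deriv (1, 0) (Gz m l)) (0, 0) * Qz j k l (0, 0)
        + dir_deriv (1, 0) (Gz m l) (0, 0) * dir_deriv (0, axis i 1) (Qz j k l) (0, 0))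
     + (dir_deriv (0, axis i 1) (Gz m l) (0, 0) * dir_deriv (1, 0) (Qz j k l) (0, 0)
        + Gz m l (0, 0) * dir_deriv (0, axis i 1) (dir_deriv (1, 0) (Qz j k l)) (0, 0)))"
  proof -
    have s: "(\<lambda>z. \<Sum>l\<in>UNIV. dir_deriv (1, 0) (Gz m l) z * Qz j k l z + Gz m l z * dir_deriv (1, 0) (Qz j k l) z) \<in> zl.Sm"
      by (intro zl.Sm_sum zl.Sm_add zl.Sm_mult zl.Sm_dd Gz_Sm Qz_Sm) simp
    show ?thesis unfolding zl.dd_cmult[OF s zero_S']
      by (simp add: zl.dd_sum[OF _ _ zero_S'] zl.dd_add[OF _ _ zero_S'] zl.dd_mult[OF _ _ zero_S']
          zl.Sm_add zl.Sm_mult zl.Sm_dd Gz_Sm Qz_Sm)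
  qed
  also have "\<dots> = 1 / 2 * dir_deriv (0, axis i 1) (dir_deriv (1, 0) (Qz j k m)) (0, 0)"
    unfolding Qz00 dQz00 dGz00 Gz00
    by (simp only: mult_zero_right mult_zero_left add_0_left add_0_right sum_ind2)
  finally show ?thesis unfolding ddtQz00 .
qed

end

lemma Ric2v_sym: "Ric2v a x y p q = Ric2v a x y q p"
  using Ric2[of p q a x y] Ric2[of q p a x y] sl.clairaut[OF Ric0_Sm, of 0 "ee p" "ee q"] by simp

context RF
begin

lemma dtRz00: "dir_deriv (1, 0) (Rz i j k l) (0, 0) =
   1 / 2 * (DD i j k l + DD i k j l - DD i l j k) - 1 / 2 * (DD j i k l + DD j k i l - DD j l i k)"
proof -
  have s1: "(\<lambda>z. dir_deriv (0, axis i 1) (Gamz j k l) z - dir_deriv (0, axis j 1) (Gamz i k l) z) \<in> zl.Sm"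
    by (intro zl.Sm_diff zl.Sm_dd Gamz_Sm)
  have s2: "(\<lambda>z. \<Sum>p\<in>UNIV. Gamz j k p z * Gamz i p l z - Gamz i k p z * Gamz j p l z) \<in> zl.Sm"
    by (intro zl.Sm_sum zl.Sm_diff zl.Sm_mult Gamz_Sm) simp
  have "dir_deriv (1, 0) (Rz i j k l) (0, 0) =
     dir_deriv (1, 0) (dir_deriv (0, axis i 1) (Gamz j k l)) (0, 0) - dir_deriv (1, 0) (dir_deriv (0, axis j 1) (Gamz i k l)) (0, 0)
     + (\<Sum>p\<in>UNIV. (dir_deriv (1, 0) (Gamz j k p) (0, 0) * Gamz i p l (0, 0) + Gamz j k p (0, 0) * dir_deriv (1, 0) (Gamz i p l) (0, 0))
        - (dir_deriv (1, 0) (Gamz i k p) (0, 0) * Gamz j p l (0, 0) + Gamz i k p (0, 0) * dir_deriv (1, 0) (Gamz j p l) (0, 0)))"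
    unfolding Rz_def zl.dd_add[OF s1 s2 zero_S']
    by (simp add: zl.dd_diff[OF _ _ zero_S'] zl.dd_sum[OF _ _ zero_S'] zl.dd_mult[OF _ _ zero_S'] zl.Sm_dd
        zl.Sm_mult zl.Sm_diff Gamz_Sm)
  then show ?thesis by (simp add: Gamz00 Kd)
qed

lemma dtRmz00: "dir_deriv (1, 0) (Rmz i j k l) (0, 0) = dir_deriv (1, 0) (Rz i j k l) (0, 0)"
proof -
  have "dir_deriv (1, 0) (Rmz i j k l) (0, 0) =
      (\<Sum>m\<in>UNIV. dir_deriv (1, 0) (Rz i j k m) (0, 0) * F m l (0, 0) + Rz i j k m (0, 0) * dir_deriv (1, 0) (F m l) (0, 0))"
    unfolding Rmz_def by (simp add: zl.dd_sum[OF _ _ zero_S'] zl.dd_mult[OF _ _ zero_S'] zl.Sm_mult Rz_Sm F_Sm0)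
  also have "\<dots> = (\<Sum>m\<in>UNIV. dir_deriv (1, 0) (Rz i j k m) (0, 0) * (if m = l then 1 else 0))"
    by (simp add: F00 Rz00)
  also have "\<dots> = dir_deriv (1, 0) (Rz i j k l) (0, 0)" by (rule sum_ind)
  finally show ?thesis .
qed

lemma dtRm: "((\<lambda>t. Rm g t 0 i j k l) has_real_derivative DRv a i j k l) (at 0)"
proof -
  have d: "((\<lambda>s. Rmz i j k l ((0, 0) + s *\<^sub>R (1, 0))) has_real_derivative dir_deriv (1, 0) (Rmz i j k l) (0, 0)) (at 0)"
    by (rule zl.Sm_line[OF Rmz_Sm zero_S'])
  have "dir_deriv (1, 0) (Rmz i j k l) (0, 0) =
      1 / 2 * (DD i j k l + DD i k j l - DD i l j k) - 1 / 2 * (DD j i k l + DD j k i l - DD j l i k)"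
    by (simp only: dtRmz00 dtRz00)
  also have "\<dots> = 1 / 2 * (- 2 * Ric2v a k l i j + - 2 * Ric2v a j l i k - - 2 * Ric2v a j k i l)
      - 1 / 2 * (- 2 * Ric2v a k l j i + - 2 * Ric2v a i l j k - - 2 * Ric2v a i k j l)"
    by (simp only: DD_def DDg)
  also have "\<dots> = DRv a i j k l"
    unfolding DRv_def Ric2v_sym[of a k l i j] by (simp add: algebra_simps)
  finally have v: "dir_deriv (1, 0) (Rmz i j k l) (0, 0) = DRv a i j k l" .
  have e: "(\<lambda>s. Rmz i j k l ((0, 0) + s *\<^sub>R (1, 0))) = (\<lambda>t. Rm g t 0 i j k l)"
  proof
    fix s :: real
    have "(0::real, 0::(real, 'n) vec) + s *\<^sub>R (1, 0) = (s, 0)" by simp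
    then show "Rmz i j k l ((0, 0) + s *\<^sub>R (1, 0)) = Rm g s 0 i j k l" by (simp only: Rm_z)
  qed
  show ?thesis using d unfolding v e .
qed

lemma dtRm_right: "((\<lambda>t. Rm g t 0 i j k l) has_real_derivative DRv a i j k l) (at_right 0)"
  by (rule has_field_derivative_at_within[OF dtRm])

end


definition dl :: "'a \<Rightarrow> 'a \<Rightarrow> real" where "dl p q = (if p = q then 1 else 0)"

lemma dl_same[simp]: "dl p p = 1" by (simp add: dl_def)
lemma dl_ne[simp]: "p \<noteq> q \<Longrightarrow> dl p q = 0" by (simp add: dl_def)
lemma dl_ne'[simp]: "q \<noteq> p \<Longrightarrow> dl p q = 0" by (simp add: dl_def)

lemma Fc_dl: "Fc a u v x = 2 * (a u v * dl x v + a v u * dl x u + a x u * dl u v)"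
  by (auto simp: Fc_def dl_def)

lemma s1: "(\<Sum>x\<in>UNIV. (c * dl x p) * (d * dl x q)) = c * d * dl p (q::'n::finite)"
proof -
  have "(\<Sum>x\<in>UNIV. (c * dl x p) * (d * dl x q)) = (\<Sum>x\<in>UNIV. if x = p then c * d * dl p q else 0)"
    by (rule sum.cong) (auto simp: dl_def)
  then show ?thesis by simp
qed

lemma s2: "(\<Sum>x\<in>UNIV. (c * dl x p) * (f x * e)) = c * f p * (e::real)" for p :: "'n::finite"
proof -
  have "(\<Sum>x\<in>UNIV. (c * dl x p) * (f x * e)) = (\<Sum>x\<in>UNIV. if x = p then c * f p * e else 0)"
    by (rule sum.cong) (auto simp: dl_def)
  then show ?thesis by simp
qed

lemma s3: "(\<Sum>x\<in>UNIV. (f x * e) * (c * dl x p)) = c * f p * (e::real)" for p :: "'n::finite"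
proof -
  have "(\<Sum>x\<in>UNIV. (f x * e) * (c * dl x p)) = (\<Sum>x\<in>UNIV. if x = p then c * f p * e else 0)"
    by (rule sum.cong) (auto simp: dl_def)
  then show ?thesis by simp
qed

lemma s4: "(\<Sum>x\<in>UNIV. (f x * e) * (h x * e')) = e * e' * (\<Sum>x\<in>UNIV. f x * h x :: real)"
  by (simp add: sum_distrib_left algebra_simps)

definition Tb :: "('n::finite \<Rightarrow> 'n \<Rightarrow> real) \<Rightarrow> 'n \<Rightarrow> 'n \<Rightarrow> 'n \<Rightarrow> 'n \<Rightarrow> real" where
  "Tb a u v w z =
     a u v * a w z * dl v z + a u v * a z w * dl v w + a u v * a v w * dl w z
   + a v u * a w z * dl u z + a v u * a z w * dl u w + a v u * a u w * dl w z
   + a z u * a w z * dl u v + a w u * a z w * dl u v + dl u v * dl w z * (\<Sum>x\<in>UNIV. a x u * a x w)"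

lemma Sx: "(\<Sum>x\<in>UNIV. Fc a u v x * Fc a w z x) = 4 * Tb a u v w z"
proof -
  have "(\<Sum>x\<in>UNIV. Fc a u v x * Fc a w z x) = 4 * (\<Sum>x\<in>UNIV.
      ((a u v * dl x v) * (a w z * dl x z) + (a u v * dl x v) * (a z w * dl x w) + (a u v * dl x v) * (a x w * dl w z))
    + ((a v u * dl x u) * (a w z * dl x z) + (a v u * dl x u) * (a z w * dl x w) + (a v u * dl x u) * (a x w * dl w z))
    + ((a x u * dl u v) * (a w z * dl x z) + (a x u * dl u v) * (a z w * dl x w) + (a x u * dl u v) * (a x w * dl w z)))"
    unfolding Fc_dl sum_distrib_left by (rule sum.cong) (simp_all add: algebra_simps)
  also have "\<dots> = 4 * Tb a u v w z"
    unfolding sum.distrib s1 s2 s3 s4 Tb_def by (simp add: algebra_simps)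
  finally show ?thesis .
qed

lemma DRv_closed: "DRv a i j k l = 8 * (Tb a j k i l - Tb a i k j l)"
  unfolding DRv_eq sum_subtractf Sx by simp

lemma DRv_anti1: "DRv a i j k l = - DRv a j i k l"
  unfolding DRv_eq by (simp add: sum_subtractf algebra_simps)

lemma DRv_anti2: "DRv a i j k l = - DRv a i j l k"
  unfolding DRv_eq by (simp add: sum_subtractf algebra_simps)

lemma DRv_ii: "DRv a i i k l = 0"
  using DRv_anti1[of a i i k l] by simp

lemma DRv_kk: "DRv a i j k k = 0"
  using DRv_anti2[of a i j k k] by simp

lemma DRv_distinct:
  assumes d: "distinct [i, j, k, l]"
  shows "DRv a i j k l = 0"
proof -
  have ne: "i \<noteq> j" "i \<noteq> k" "i \<noteq> l" "j \<noteq> i" "j \<noteq> k" "j \<noteq> l" "k \<noteq> i" "k \<noteq> j" "k \<noteq> l" "l \<noteq> i" "l \<noteq> j" "l \<noteq> k" using d by auto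
  show ?thesis unfolding DRv_closed Tb_def using ne by (simp add: algebra_simps)
qed

lemma DRv_jk:
  assumes d: "distinct [i, j, l]"
  shows "DRv a i j j l = 8 * (a i l * a l j + a l i * a i j) - 8 * a i j * a l j"
proof -
  have ne: "i \<noteq> j" "i \<noteq> l" "j \<noteq> i" "j \<noteq> l" "l \<noteq> i" "l \<noteq> j" using d by auto
  show ?thesis unfolding DRv_closed Tb_def using ne by (simp add: algebra_simps)
qed

lemma DRv_lj:
  assumes d: "distinct [i, k, j]"
  shows "DRv a i j k j = 8 * a i j * a k j - 8 * (a i k * a k j + a k i * a i j)"
proof -
  have ne: "i \<noteq> k" "i \<noteq> j" "k \<noteq> i" "k \<noteq> j" "j \<noteq> i" "j \<noteq> k" using d by auto
  show ?thesis unfolding DRv_closed Tb_def using ne by (simp add: algebra_simps)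
qed

lemma DRv_ik:
  assumes d: "distinct [i, j, l]"
  shows "DRv a i j i l = 8 * a l i * a j i - 8 * (a j l * a l i + a l j * a j i)"
proof -
  have ne: "i \<noteq> j" "i \<noteq> l" "j \<noteq> i" "j \<noteq> l" "l \<noteq> i" "l \<noteq> j" using d by auto
  show ?thesis unfolding DRv_closed Tb_def using ne by (simp add: algebra_simps)
qed

lemma DRv_ijij: "i \<noteq> j \<Longrightarrow> DRv a i j i j =
   8 * ((a i j)^2 + (a j i)^2) - 8 * ((\<Sum>q\<in>UNIV - {i, j}. a q i * a q j) + 3 * a i i * a i j + 3 * a j j * a j i)"
proof -
  assume ij: "i \<noteq> j"
  have "(\<Sum>q\<in>UNIV. a q i * a q j) = a i i * a i j + a j i * a j j + (\<Sum>q\<in>UNIV - {i, j}. a q i * a q j)"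
  proof -
    have "(\<Sum>q\<in>UNIV. a q i * a q j) = (\<Sum>q\<in>UNIV - {i, j}. a q i * a q j) + (\<Sum>q\<in>{i, j}. a q i * a q j)"
      by (rule sum.subset_diff) auto
    then show ?thesis using ij by simp
  qed
  moreover have "j \<noteq> i" using ij by simp
  ultimately show ?thesis using ij
    unfolding DRv_closed Tb_def by (simp add: algebra_simps power2_eq_square)
qed

lemma DRv_cond:
  assumes cond: "\<forall>\<alpha> \<beta> \<gamma>. distinct [\<alpha>, \<beta>, \<gamma>] \<longrightarrow> a \<alpha> \<beta> * a \<beta> \<gamma> + a \<beta> \<alpha> * a \<alpha> \<gamma> = a \<alpha> \<gamma> * a \<beta> \<gamma>"
    and ne: "{i, j} \<noteq> {k, l}"
  shows "DRv a i j k l = 0"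
proof (cases "i = j")
  case True then show ?thesis by (simp add: DRv_ii)
next
  case ij: False
  show ?thesis
  proof (cases "k = l")
    case True then show ?thesis by (simp add: DRv_kk)
  next
    case kl: False
    show ?thesis
    proof (cases "j = k")
      case jk: True
      have d: "distinct [i, j, l]" using ij kl ne jk by auto
      have e: "a i l * a l j + a l i * a i j = a i j * a l j" using cond d by auto
      have "DRv a i j j l = 0" unfolding DRv_jk[where a=a, OF d] e by (simp add: mult.assoc)
      then show ?thesis using jk by simp
    next
      case njk: False
      show ?thesis
      proof (cases "j = l")
        case jl: True
        have d: "distinct [i, k, j]" using ij kl ne jl by auto
        have e: "a i k * a k j + a k i * a i j = a i j * a k j" using cond d by auto
        have "DRv a i j k j = 0" unfolding DRv_lj[where a=a, OF d] e by (simp add: mult.assoc)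
        then show ?thesis using jl by simp
      next
        case njl: False
        show ?thesis
        proof (cases "i = k")
          case ik: True
          have d: "distinct [i, j, l]" using ij kl njl ik by auto
          have e: "a j l * a l i + a l j * a j i = a j i * a l i" using cond d by auto
          have "DRv a i j i l = 0" unfolding DRv_ik[where a=a, OF d] e by (simp add: mult.assoc mult.commute)
          then show ?thesis using ik by simp
        next
          case nik: False
          show ?thesis
          proof (cases "i = l")
            case il: True
            have d: "distinct [i, j, k]" using ij kl njk il by auto
            have e: "a j k * a k i + a k j * a j i = a j i * a k i" using cond d by auto
            have "DRv a i j i k = 0" unfolding DRv_ik[where a=a, OF d] e by (simp add: mult.assoc mult.commute)
            then show ?thesis using DRv_anti2[of a i j k l] il by simp
          next
            case nil: False
            have "distinct [i, j, k, l]" using ij kl njk njl nik nil by auto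
            then show ?thesis by (rule DRv_distinct)
          qed
        qed
      qed
    qed
  qed
qed


theorem mainTheorem1:
  fixes a :: "'n::{finite,linorder} \<Rightarrow> 'n \<Rightarrow> real"
    and g :: "real \<Rightarrow> (real, 'n) vec \<Rightarrow> ((real, 'n) vec, 'n) vec"
    and U :: "(real, 'n) vec set" and S :: "(real \<times> (real, 'n) vec) set" and T :: real
  assumes n2: "CARD('n) \<ge> 2"
    and T: "T > 0"
    and U: "open U" "0 \<in> U"
    and S: "open S" "{0..<T} \<times> U \<subseteq> S"
    and smooth: "\<And>i j. smooth_fun_on S (\<lambda>(t, x). g t x $ i $ j)"
    and metric: "\<And>t x. t \<in> {0..<T} \<Longrightarrow> x \<in> U \<Longrightarrow>
        transpose (g t x) = g t x \<and> (\<forall>v. v \<noteq> 0 \<longrightarrow> v \<bullet> (g t x *v v) > 0)"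
    and ricci_flow: "\<And>t x i j. t \<in> {0..<T} \<Longrightarrow> x \<in> U \<Longrightarrow>
        ((\<lambda>s. g s x $ i $ j) has_real_derivative (- 2 * Ric g t x i j)) (at t within {0..<T})"
    and init: "\<And>x. x \<in> U \<Longrightarrow> g 0 x = graph_metric (cubic_f a) x"
  shows "(\<forall>i j k l. Rm g 0 0 i j k l = 0)
    \<and> (\<forall>i j k l. i < j \<and> k < l \<and> i \<le> k \<and> distinct [i, j, k, l] \<longrightarrow>
          ((\<lambda>t. Rm g t 0 i j k l) has_real_derivative 0) (at_right 0))
    \<and> (\<forall>i j k l. i < k \<and> k = j \<and> j < l \<longrightarrow>
          ((\<lambda>t. Rm g t 0 i j k l) has_real_derivative
             (8 * (a i l * a l j + a l i * a i j) - 8 * a i j * a l j)) (at_right 0))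
    \<and> (\<forall>i j k l. i < k \<and> k < l \<and> l = j \<longrightarrow>
          ((\<lambda>t. Rm g t 0 i j k l) has_real_derivative
             (8 * a i j * a k j - 8 * (a i k * a k j + a k i * a i j))) (at_right 0))
    \<and> (\<forall>i j k l. i < j \<and> k < l \<and> i = k \<and> j \<noteq> l \<longrightarrow>
          ((\<lambda>t. Rm g t 0 i j k l) has_real_derivative
             (8 * a l i * a j i - 8 * (a j l * a l i + a l j * a j i))) (at_right 0))
    \<and> (\<forall>i j k l. i < j \<and> i = k \<and> j = l \<longrightarrow>
          ((\<lambda>t. Rm g t 0 i j k l) has_real_derivative
             (8 * ((a i j)^2 + (a j i)^2)
              - 8 * ((\<Sum>q\<in>UNIV - {i, j}. a q i * a q j) + 3 * a i i * a i j + 3 * a j j * a j i)))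
           (at_right 0))
    \<and> ((\<forall>\<alpha> \<beta> \<gamma>. distinct [\<alpha>, \<beta>, \<gamma>] \<longrightarrow>
           a \<alpha> \<beta> * a \<beta> \<gamma> + a \<beta> \<alpha> * a \<alpha> \<gamma> = a \<alpha> \<gamma> * a \<beta> \<gamma>)
       \<longrightarrow> (\<forall>i j k l. {i, j} \<noteq> {k, l} \<longrightarrow>
             ((\<lambda>t. Rm g t 0 i j k l) has_real_derivative 0) (at_right 0)))"
proof -
  interpret RF a g U S T
    by unfold_locales (use T U S smooth ricci_flow init in auto)
  have D: "((\<lambda>t. Rm g t 0 i j k l) has_real_derivative DRv a i j k l) (at_right 0)" for i j k l
    by (rule dtRm_right)
  show ?thesis
  proof (intro conjI allI impI)
    fix i j k l
    show "Rm g 0 0 i j k l = 0" by (rule Rm_0)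
  next
    fix i j k l :: 'n
    assume h: "i < j \<and> k < l \<and> i \<le> k \<and> distinct [i, j, k, l]"
    show "((\<lambda>t. Rm g t 0 i j k l) has_real_derivative 0) (at_right 0)"
      using D[of i j k l] DRv_distinct[of i j k l a] h by simp
  next
    fix i j k l :: 'n
    assume h: "i < k \<and> k = j \<and> j < l"
    then have d: "distinct [i, j, l]" by auto
    show "((\<lambda>t. Rm g t 0 i j k l) has_real_derivative
             (8 * (a i l * a l j + a l i * a i j) - 8 * a i j * a l j)) (at_right 0)"
      using D[of i j k l] DRv_jk[where a=a, OF d] h by simp
  next
    fix i j k l :: 'n
    assume h: "i < k \<and> k < l \<and> l = j"
    then have d: "distinct [i, k, j]" by auto
    show "((\<lambda>t. Rm g t 0 i j k l) has_real_derivative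
             (8 * a i j * a k j - 8 * (a i k * a k j + a k i * a i j))) (at_right 0)"
      using D[of i j k l] DRv_lj[where a=a, OF d] h by simp
  next
    fix i j k l :: 'n
    assume h: "i < j \<and> k < l \<and> i = k \<and> j \<noteq> l"
    then have d: "distinct [i, j, l]" by auto
    show "((\<lambda>t. Rm g t 0 i j k l) has_real_derivative
             (8 * a l i * a j i - 8 * (a j l * a l i + a l j * a j i))) (at_right 0)"
      using D[of i j k l] DRv_ik[where a=a, OF d] h by simp
  next
    fix i j k l :: 'n
    assume h: "i < j \<and> i = k \<and> j = l"
    then have d: "i \<noteq> j" by auto
    show "((\<lambda>t. Rm g t 0 i j k l) has_real_derivative
             (8 * ((a i j)^2 + (a j i)^2)
              - 8 * ((\<Sum>q\<in>UNIV - {i, j}. a q i * a q j) + 3 * a i i * a i j + 3 * a j j * a j i)))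
           (at_right 0)"
      using D[of i j k l] DRv_ijij[where a=a, OF d] h by simp
  next
    fix i j k l :: 'n
    assume c: "\<forall>\<alpha> \<beta> \<gamma>. distinct [\<alpha>, \<beta>, \<gamma>] \<longrightarrow>
           a \<alpha> \<beta> * a \<beta> \<gamma> + a \<beta> \<alpha> * a \<alpha> \<gamma> = a \<alpha> \<gamma> * a \<beta> \<gamma>"
      and ne: "{i, j} \<noteq> {k, l}"
    show "((\<lambda>t. Rm g t 0 i j k l) has_real_derivative 0) (at_right 0)"
      using D[of i j k l] DRv_cond[OF c ne] by simp
  qed
qed

end
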